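(* If $\mathcal{D}$ is a fibrant double category, then the functor $\mathbf{Mnd}(\mathcal{D})\to\mathcal{D}_0$ is a fibration and the functor $\mathbf{Cmd}(\mathcal{D})\to\mathcal{D}_0$ is an opfibration, where both functors send a (co)monad $M\colon A\nrightarrow A$ to $A$ and a (co)monad morphism to its vertical source (equal to its target).
   Context: A (pseudo) double category $\mathcal{D}$ has a category $\mathcal{D}_0$ of objects and vertical 1-cells, a category $\mathcal{D}_1$ of horizontal 1-cells $M\colon A\nrightarrow B$ and 2-morphisms (squares with vertical source and target), units $1_A$, and horizontal composition $\odot$ associative and unital up to coherent globular isomorphisms (globular: identity vertical source and target). A monad in $\mathcal{D}$ is a horizontal endo-1-cell $M\colon A\nrightarrow A$ with globular 2-morphisms $m\colon M\odot M\Rightarrow M$ and $\eta\colon1_A\Rightarrow M$ satisfying associativity and unit laws; a monad morphism $M\to N$ ($N\colon B\nrightarrow B$) is a 2-morphism $M\Rightarrow N$ whose vertical source and target are the same $f\colon A\to B$, compatible with multiplications and units. This gives the category $\mathbf{Mnd}(\mathcal{D})$. Dually, comonads $C\colon A\nrightarrow A$ with globular $\Delta\colon C\Rightarrow C\odot C$, $\epsilon\colon C\Rightarrow1_A$ (coassociative, counital) and comonad morphisms (2-morphisms with equal vertical source and target compatible with $\Delta,\epsilon$) form $\mathbf{Cmd}(\mathcal{D})$. $\mathcal{D}$ is fibrant if every vertical $f\colon A\to B$ has a companion $\hat f\colon A\nrightarrow B$ (with $p_1\colon\hat f\Rightarrow1_B$ of vertical source $f$, target $\mathrm{id}_B$,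 and $p_2\colon1_A\Rightarrow\hat f$ of source $\mathrm{id}_A$, target $f$, $p_1p_2=1_f$, $p_1\odot p_2\cong1_{\hat f}$) and a conjoint $\check f\colon B\nrightarrow A$ (with $q_1\colon\check f\Rightarrow1_B$ of source $\mathrm{id}_B$, target $f$, $q_2\colon1_A\Rightarrow\check f$ of source $f$, target $\mathrm{id}_A$, $q_1q_2=1_f$, $q_2\odot q_1\cong1_{\check f}$). *)

theory Defs
  imports Main
begin

text \<open>Types: 'o objects, 'v vertical 1-cells, 'h horizontal 1-cells, 's 2-morphisms (squares).
  Conventions: vcomp g f = g \<circ> f (f first); scomp \<beta> \<alpha> = \<beta> \<circ> \<alpha> (vertical composite
  of squares, i.e. composition in D1, \<alpha> first).
  Horizontal composition is written in applicative order, as in the paper's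
  "p1 \<odot> p2": for M : A -/-> B and N : B -/-> C, hcomp N M = N \<odot> M : A -/-> C;
  for squares, shcomp \<beta> \<alpha> = \<beta> \<odot> \<alpha> requires sright \<alpha> = sleft \<beta>.
  A square \<alpha> : M \<Rightarrow> N has horizontal source sdom \<alpha> = M, target scod \<alpha> = N,
  vertical source sleft \<alpha> : hsrc M \<rightarrow> hsrc N and vertical target sright \<alpha> : htgt M \<rightarrow> htgt N.\<close>

record ('o,'v,'h,'s) dblcat =
  Ob :: "'o set"
  VAr :: "'v set"
  vdom :: "'v \<Rightarrow> 'o"
  vcod :: "'v \<Rightarrow> 'o"
  vid :: "'o \<Rightarrow> 'v"
  vcomp :: "'v \<Rightarrow> 'v \<Rightarrow> 'v"
  HAr :: "'h set"
  hsrc :: "'h \<Rightarrow> 'o"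
  htgt :: "'h \<Rightarrow> 'o"
  Sq :: "'s set"
  sdom :: "'s \<Rightarrow> 'h"
  scod :: "'s \<Rightarrow> 'h"
  sleft :: "'s \<Rightarrow> 'v"
  sright :: "'s \<Rightarrow> 'v"
  sid :: "'h \<Rightarrow> 's"
  scomp :: "'s \<Rightarrow> 's \<Rightarrow> 's"
  hunit :: "'o \<Rightarrow> 'h"
  sunit :: "'v \<Rightarrow> 's"
  hcomp :: "'h \<Rightarrow> 'h \<Rightarrow> 'h"
  shcomp :: "'s \<Rightarrow> 's \<Rightarrow> 's"
  assoc :: "'h \<Rightarrow> 'h \<Rightarrow> 'h \<Rightarrow> 's"
  lunit :: "'h \<Rightarrow> 's"
  runit :: "'h \<Rightarrow> 's"

definition glob_iso :: "('o,'v,'h,'s,'z) dblcat_scheme \<Rightarrow> 's \<Rightarrow> 'h \<Rightarrow> 'h \<Rightarrow> bool" where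
  "glob_iso D \<theta> X Y \<longleftrightarrow> \<theta> \<in> Sq D \<and> sdom D \<theta> = X \<and> scod D \<theta> = Y \<and>
     sleft D \<theta> = vid D (hsrc D X) \<and> sright D \<theta> = vid D (htgt D X) \<and>
     (\<exists>\<psi>\<in>Sq D. sdom D \<psi> = Y \<and> scod D \<psi> = X \<and>
        scomp D \<psi> \<theta> = sid D X \<and> scomp D \<theta> \<psi> = sid D Y)"

definition pseudo_double_category :: "('o,'v,'h,'s,'z) dblcat_scheme \<Rightarrow> bool" where
  "pseudo_double_category D \<longleftrightarrow>
   \<comment> \<open>D0 is a category\<close>
   (\<forall>a\<in>Ob D. vid D a \<in> VAr D \<and> vdom D (vid D a) = a \<and> vcod D (vid D a) = a) \<and>
   (\<forall>f\<in>VAr D. vdom D f \<in> Ob D \<and> vcod D f \<in> Ob D) \<and>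
   (\<forall>f\<in>VAr D. \<forall>g\<in>VAr D. vcod D f = vdom D g \<longrightarrow>
      vcomp D g f \<in> VAr D \<and> vdom D (vcomp D g f) = vdom D f \<and> vcod D (vcomp D g f) = vcod D g) \<and>
   (\<forall>f\<in>VAr D. vcomp D f (vid D (vdom D f)) = f \<and> vcomp D (vid D (vcod D f)) f = f) \<and>
   (\<forall>f\<in>VAr D. \<forall>g\<in>VAr D. \<forall>h\<in>VAr D. vcod D f = vdom D g \<longrightarrow> vcod D g = vdom D h \<longrightarrow>
      vcomp D h (vcomp D g f) = vcomp D (vcomp D h g) f) \<and>
   \<comment> \<open>D1 is a category\<close>
   (\<forall>M\<in>HAr D. sid D M \<in> Sq D \<and> sdom D (sid D M) = M \<and> scod D (sid D M) = M) \<and>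
   (\<forall>\<alpha>\<in>Sq D. sdom D \<alpha> \<in> HAr D \<and> scod D \<alpha> \<in> HAr D) \<and>
   (\<forall>\<alpha>\<in>Sq D. \<forall>\<beta>\<in>Sq D. scod D \<alpha> = sdom D \<beta> \<longrightarrow>
      scomp D \<beta> \<alpha> \<in> Sq D \<and> sdom D (scomp D \<beta> \<alpha>) = sdom D \<alpha> \<and> scod D (scomp D \<beta> \<alpha>) = scod D \<beta>) \<and>
   (\<forall>\<alpha>\<in>Sq D. scomp D \<alpha> (sid D (sdom D \<alpha>)) = \<alpha> \<and> scomp D (sid D (scod D \<alpha>)) \<alpha> = \<alpha>) \<and>
   (\<forall>\<alpha>\<in>Sq D. \<forall>\<beta>\<in>Sq D. \<forall>\<gamma>\<in>Sq D. scod D \<alpha> = sdom D \<beta> \<longrightarrow> scod D \<beta> = sdom D \<gamma> \<longrightarrow>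
      scomp D \<gamma> (scomp D \<beta> \<alpha>) = scomp D (scomp D \<gamma> \<beta>) \<alpha>) \<and>
   \<comment> \<open>source and target functors S, T : D1 \<rightarrow> D0\<close>
   (\<forall>M\<in>HAr D. hsrc D M \<in> Ob D \<and> htgt D M \<in> Ob D) \<and>
   (\<forall>\<alpha>\<in>Sq D. sleft D \<alpha> \<in> VAr D \<and> vdom D (sleft D \<alpha>) = hsrc D (sdom D \<alpha>) \<and>
        vcod D (sleft D \<alpha>) = hsrc D (scod D \<alpha>) \<and>
      sright D \<alpha> \<in> VAr D \<and> vdom D (sright D \<alpha>) = htgt D (sdom D \<alpha>) \<and>
        vcod D (sright D \<alpha>) = htgt D (scod D \<alpha>)) \<and>
   (\<forall>M\<in>HAr D. sleft D (sid D M) = vid D (hsrc D M) \<and> sright D (sid D M) = vid D (htgt D M)) \<and>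
   (\<forall>\<alpha>\<in>Sq D. \<forall>\<beta>\<in>Sq D. scod D \<alpha> = sdom D \<beta> \<longrightarrow>
      sleft D (scomp D \<beta> \<alpha>) = vcomp D (sleft D \<beta>) (sleft D \<alpha>) \<and>
      sright D (scomp D \<beta> \<alpha>) = vcomp D (sright D \<beta>) (sright D \<alpha>)) \<and>
   \<comment> \<open>unit functor U : D0 \<rightarrow> D1\<close>
   (\<forall>a\<in>Ob D. hunit D a \<in> HAr D \<and> hsrc D (hunit D a) = a \<and> htgt D (hunit D a) = a) \<and>
   (\<forall>f\<in>VAr D. sunit D f \<in> Sq D \<and> sdom D (sunit D f) = hunit D (vdom D f) \<and>
      scod D (sunit D f) = hunit D (vcod D f) \<and> sleft D (sunit D f) = f \<and> sright D (sunit D f) = f) \<and>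
   (\<forall>a\<in>Ob D. sunit D (vid D a) = sid D (hunit D a)) \<and>
   (\<forall>f\<in>VAr D. \<forall>g\<in>VAr D. vcod D f = vdom D g \<longrightarrow>
      sunit D (vcomp D g f) = scomp D (sunit D g) (sunit D f)) \<and>
   \<comment> \<open>horizontal composition functor D1 \<times>_D0 D1 \<rightarrow> D1\<close>
   (\<forall>M\<in>HAr D. \<forall>N\<in>HAr D. htgt D M = hsrc D N \<longrightarrow>
      hcomp D N M \<in> HAr D \<and> hsrc D (hcomp D N M) = hsrc D M \<and> htgt D (hcomp D N M) = htgt D N) \<and>
   (\<forall>\<alpha>\<in>Sq D. \<forall>\<beta>\<in>Sq D. sright D \<alpha> = sleft D \<beta> \<longrightarrow>
      shcomp D \<beta> \<alpha> \<in> Sq D \<and> sdom D (shcomp D \<beta> \<alpha>) = hcomp D (sdom D \<beta>) (sdom D \<alpha>) \<and>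
      scod D (shcomp D \<beta> \<alpha>) = hcomp D (scod D \<beta>) (scod D \<alpha>) \<and>
      sleft D (shcomp D \<beta> \<alpha>) = sleft D \<alpha> \<and> sright D (shcomp D \<beta> \<alpha>) = sright D \<beta>) \<and>
   (\<forall>M\<in>HAr D. \<forall>N\<in>HAr D. htgt D M = hsrc D N \<longrightarrow>
      shcomp D (sid D N) (sid D M) = sid D (hcomp D N M)) \<and>
   (\<forall>\<alpha>\<in>Sq D. \<forall>\<alpha>'\<in>Sq D. \<forall>\<beta>\<in>Sq D. \<forall>\<beta>'\<in>Sq D.
      scod D \<alpha> = sdom D \<alpha>' \<longrightarrow> scod D \<beta> = sdom D \<beta>' \<longrightarrow>
      sright D \<alpha> = sleft D \<beta> \<longrightarrow> sright D \<alpha>' = sleft D \<beta>' \<longrightarrow>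
      shcomp D (scomp D \<beta>' \<beta>) (scomp D \<alpha>' \<alpha>) = scomp D (shcomp D \<beta>' \<alpha>') (shcomp D \<beta> \<alpha>)) \<and>
   \<comment> \<open>associator and unitors: globular isomorphisms\<close>
   (\<forall>M\<in>HAr D. \<forall>N\<in>HAr D. \<forall>P\<in>HAr D. htgt D M = hsrc D N \<longrightarrow> htgt D N = hsrc D P \<longrightarrow>
      glob_iso D (assoc D P N M) (hcomp D (hcomp D P N) M) (hcomp D P (hcomp D N M))) \<and>
   (\<forall>M\<in>HAr D. glob_iso D (lunit D M) (hcomp D (hunit D (htgt D M)) M) M \<and>
               glob_iso D (runit D M) (hcomp D M (hunit D (hsrc D M))) M) \<and>
   \<comment> \<open>naturality\<close>
   (\<forall>\<alpha>\<in>Sq D. \<forall>\<beta>\<in>Sq D. \<forall>\<gamma>\<in>Sq D. sright D \<alpha> = sleft D \<beta> \<longrightarrow> sright D \<beta> = sleft D \<gamma> \<longrightarrow>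
      scomp D (assoc D (scod D \<gamma>) (scod D \<beta>) (scod D \<alpha>)) (shcomp D (shcomp D \<gamma> \<beta>) \<alpha>) =
      scomp D (shcomp D \<gamma> (shcomp D \<beta> \<alpha>)) (assoc D (sdom D \<gamma>) (sdom D \<beta>) (sdom D \<alpha>))) \<and>
   (\<forall>\<alpha>\<in>Sq D.
      scomp D (lunit D (scod D \<alpha>)) (shcomp D (sunit D (sright D \<alpha>)) \<alpha>) = scomp D \<alpha> (lunit D (sdom D \<alpha>)) \<and>
      scomp D (runit D (scod D \<alpha>)) (shcomp D \<alpha> (sunit D (sleft D \<alpha>))) = scomp D \<alpha> (runit D (sdom D \<alpha>))) \<and>
   \<comment> \<open>pentagon and triangle\<close>
   (\<forall>M\<in>HAr D. \<forall>N\<in>HAr D. \<forall>P\<in>HAr D. \<forall>Q\<in>HAr D.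
      htgt D M = hsrc D N \<longrightarrow> htgt D N = hsrc D P \<longrightarrow> htgt D P = hsrc D Q \<longrightarrow>
      scomp D (assoc D Q P (hcomp D N M)) (assoc D (hcomp D Q P) N M) =
      scomp D (shcomp D (sid D Q) (assoc D P N M))
        (scomp D (assoc D Q (hcomp D P N) M) (shcomp D (assoc D Q P N) (sid D M)))) \<and>
   (\<forall>M\<in>HAr D. \<forall>N\<in>HAr D. htgt D M = hsrc D N \<longrightarrow>
      scomp D (shcomp D (sid D N) (lunit D M)) (assoc D N (hunit D (htgt D M)) M) =
      shcomp D (runit D N) (sid D M))"

definition has_companion :: "('o,'v,'h,'s,'z) dblcat_scheme \<Rightarrow> 'v \<Rightarrow> bool" where
  "has_companion D f \<longleftrightarrow> (\<exists>fh\<in>HAr D. \<exists>p1\<in>Sq D. \<exists>p2\<in>Sq D.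
     hsrc D fh = vdom D f \<and> htgt D fh = vcod D f \<and>
     sdom D p1 = fh \<and> scod D p1 = hunit D (vcod D f) \<and> sleft D p1 = f \<and> sright D p1 = vid D (vcod D f) \<and>
     sdom D p2 = hunit D (vdom D f) \<and> scod D p2 = fh \<and> sleft D p2 = vid D (vdom D f) \<and> sright D p2 = f \<and>
     scomp D p1 p2 = sunit D f \<and>
     scomp D (lunit D fh) (shcomp D p1 p2) = runit D fh)"

definition has_conjoint :: "('o,'v,'h,'s,'z) dblcat_scheme \<Rightarrow> 'v \<Rightarrow> bool" where
  "has_conjoint D f \<longleftrightarrow> (\<exists>fc\<in>HAr D. \<exists>q1\<in>Sq D. \<exists>q2\<in>Sq D.
     hsrc D fc = vcod D f \<and> htgt D fc = vdom D f \<and>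
     sdom D q1 = fc \<and> scod D q1 = hunit D (vcod D f) \<and> sleft D q1 = vid D (vcod D f) \<and> sright D q1 = f \<and>
     sdom D q2 = hunit D (vdom D f) \<and> scod D q2 = fc \<and> sleft D q2 = f \<and> sright D q2 = vid D (vdom D f) \<and>
     scomp D q1 q2 = sunit D f \<and>
     scomp D (runit D fc) (shcomp D q2 q1) = lunit D fc)"

definition fibrant :: "('o,'v,'h,'s,'z) dblcat_scheme \<Rightarrow> bool" where
  "fibrant D \<longleftrightarrow> pseudo_double_category D \<and>
     (\<forall>f\<in>VAr D. has_companion D f \<and> has_conjoint D f)"

type_synonym ('o,'h,'s) mnd = "'o \<times> 'h \<times> 's \<times> 's"

definition globular :: "('o,'v,'h,'s,'z) dblcat_scheme \<Rightarrow> 's \<Rightarrow> 'h \<Rightarrow> 'h \<Rightarrow> bool" where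
  "globular D \<theta> X Y \<longleftrightarrow> \<theta> \<in> Sq D \<and> sdom D \<theta> = X \<and> scod D \<theta> = Y \<and>
     sleft D \<theta> = vid D (hsrc D X) \<and> sright D \<theta> = vid D (htgt D X)"

definition is_monad :: "('o,'v,'h,'s,'z) dblcat_scheme \<Rightarrow> ('o,'h,'s) mnd \<Rightarrow> bool" where
  "is_monad D X \<longleftrightarrow> (case X of (A, M, m, \<eta>) \<Rightarrow>
     A \<in> Ob D \<and> M \<in> HAr D \<and> hsrc D M = A \<and> htgt D M = A \<and>
     globular D m (hcomp D M M) M \<and> globular D \<eta> (hunit D A) M \<and>
     scomp D m (shcomp D m (sid D M)) =
       scomp D m (scomp D (shcomp D (sid D M) m) (assoc D M M M)) \<and>
     scomp D m (shcomp D \<eta> (sid D M)) = lunit D M \<and>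
     scomp D m (shcomp D (sid D M) \<eta>) = runit D M)"

definition monad_mor :: "('o,'v,'h,'s,'z) dblcat_scheme \<Rightarrow> ('o,'h,'s) mnd \<Rightarrow> ('o,'h,'s) mnd \<Rightarrow> 's \<Rightarrow> bool" where
  "monad_mor D X Y \<alpha> \<longleftrightarrow> is_monad D X \<and> is_monad D Y \<and>
     (case X of (A, M, m, \<eta>) \<Rightarrow> case Y of (B, N, n, \<epsilon>) \<Rightarrow>
       \<alpha> \<in> Sq D \<and> sdom D \<alpha> = M \<and> scod D \<alpha> = N \<and> sleft D \<alpha> = sright D \<alpha> \<and>
       scomp D \<alpha> m = scomp D n (shcomp D \<alpha> \<alpha>) \<and>
       scomp D \<alpha> \<eta> = scomp D \<epsilon> (sunit D (sleft D \<alpha>)))"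

definition is_comonad :: "('o,'v,'h,'s,'z) dblcat_scheme \<Rightarrow> ('o,'h,'s) mnd \<Rightarrow> bool" where
  "is_comonad D X \<longleftrightarrow> (case X of (A, C, \<Delta>, \<epsilon>) \<Rightarrow>
     A \<in> Ob D \<and> C \<in> HAr D \<and> hsrc D C = A \<and> htgt D C = A \<and>
     globular D \<Delta> C (hcomp D C C) \<and> globular D \<epsilon> C (hunit D A) \<and>
     scomp D (assoc D C C C) (scomp D (shcomp D \<Delta> (sid D C)) \<Delta>) =
       scomp D (shcomp D (sid D C) \<Delta>) \<Delta> \<and>
     scomp D (lunit D C) (scomp D (shcomp D \<epsilon> (sid D C)) \<Delta>) = sid D C \<and>
     scomp D (runit D C) (scomp D (shcomp D (sid D C) \<epsilon>) \<Delta>) = sid D C)"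

definition comonad_mor :: "('o,'v,'h,'s,'z) dblcat_scheme \<Rightarrow> ('o,'h,'s) mnd \<Rightarrow> ('o,'h,'s) mnd \<Rightarrow> 's \<Rightarrow> bool" where
  "comonad_mor D X Y \<alpha> \<longleftrightarrow> is_comonad D X \<and> is_comonad D Y \<and>
     (case X of (A, C, \<Delta>, \<epsilon>) \<Rightarrow> case Y of (B, E, \<Delta>', \<epsilon>') \<Rightarrow>
       \<alpha> \<in> Sq D \<and> sdom D \<alpha> = C \<and> scod D \<alpha> = E \<and> sleft D \<alpha> = sright D \<alpha> \<and>
       scomp D (shcomp D \<alpha> \<alpha>) \<Delta> = scomp D \<Delta>' \<alpha> \<and>
       scomp D \<epsilon>' \<alpha> = scomp D (sunit D (sleft D \<alpha>)) \<epsilon>)"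

text \<open>Grothendieck fibrations, for a functor P = (P0 on objects, P1 on morphisms)
  from a category E (objects ObE, hom-predicate HomE x y e for e : x \<rightarrow> y,
  composition compE g f = g \<circ> f) to a category B (HomB, compB likewise).\<close>
definition cartesian ::
  "('x \<Rightarrow> bool) \<Rightarrow> ('x \<Rightarrow> 'x \<Rightarrow> 'e \<Rightarrow> bool) \<Rightarrow> ('e \<Rightarrow> 'e \<Rightarrow> 'e) \<Rightarrow> ('x \<Rightarrow> 'b) \<Rightarrow> ('e \<Rightarrow> 'w) \<Rightarrow>
   ('b \<Rightarrow> 'b \<Rightarrow> 'w \<Rightarrow> bool) \<Rightarrow> ('w \<Rightarrow> 'w \<Rightarrow> 'w) \<Rightarrow> 'x \<Rightarrow> 'x \<Rightarrow> 'e \<Rightarrow> bool" where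
  "cartesian ObE HomE compE P0 P1 HomB compB x y e \<longleftrightarrow>
     (\<forall>z h g. ObE z \<and> HomE z y h \<and> HomB (P0 z) (P0 x) g \<and> compB (P1 e) g = P1 h \<longrightarrow>
        (\<exists>!k. HomE z x k \<and> P1 k = g \<and> compE e k = h))"

definition fibration ::
  "('x \<Rightarrow> bool) \<Rightarrow> ('x \<Rightarrow> 'x \<Rightarrow> 'e \<Rightarrow> bool) \<Rightarrow> ('e \<Rightarrow> 'e \<Rightarrow> 'e) \<Rightarrow> ('x \<Rightarrow> 'b) \<Rightarrow> ('e \<Rightarrow> 'w) \<Rightarrow>
   ('b \<Rightarrow> 'b \<Rightarrow> 'w \<Rightarrow> bool) \<Rightarrow> ('w \<Rightarrow> 'w \<Rightarrow> 'w) \<Rightarrow> bool" where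
  "fibration ObE HomE compE P0 P1 HomB compB \<longleftrightarrow>
     (\<forall>y a f. ObE y \<and> HomB a (P0 y) f \<longrightarrow>
        (\<exists>x e. ObE x \<and> HomE x y e \<and> P0 x = a \<and> P1 e = f \<and>
           cartesian ObE HomE compE P0 P1 HomB compB x y e))"

definition opfibration ::
  "('x \<Rightarrow> bool) \<Rightarrow> ('x \<Rightarrow> 'x \<Rightarrow> 'e \<Rightarrow> bool) \<Rightarrow> ('e \<Rightarrow> 'e \<Rightarrow> 'e) \<Rightarrow> ('x \<Rightarrow> 'b) \<Rightarrow> ('e \<Rightarrow> 'w) \<Rightarrow>
   ('b \<Rightarrow> 'b \<Rightarrow> 'w \<Rightarrow> bool) \<Rightarrow> ('w \<Rightarrow> 'w \<Rightarrow> 'w) \<Rightarrow> bool" where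
  "opfibration ObE HomE compE P0 P1 HomB compB \<longleftrightarrow>
     fibration ObE (\<lambda>x y. HomE y x) (\<lambda>g f. compE f g) P0 P1 (\<lambda>a b. HomB b a) (\<lambda>g f. compB f g)"

definition vhom :: "('o,'v,'h,'s,'z) dblcat_scheme \<Rightarrow> 'o \<Rightarrow> 'o \<Rightarrow> 'v \<Rightarrow> bool" where
  "vhom D a b f \<longleftrightarrow> f \<in> VAr D \<and> vdom D f = a \<and> vcod D f = b"

definition Mnd_fibration :: "('o,'v,'h,'s,'z) dblcat_scheme \<Rightarrow> bool" where
  "Mnd_fibration D \<longleftrightarrow>
     fibration (is_monad D) (monad_mor D) (scomp D) fst (sleft D) (vhom D) (vcomp D)"

definition Cmd_opfibration :: "('o,'v,'h,'s,'z) dblcat_scheme \<Rightarrow> bool" where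
  "Cmd_opfibration D \<longleftrightarrow>
     opfibration (is_comonad D) (comonad_mor D) (scomp D) fst (sleft D) (vhom D) (vcomp D)"

end

theory Submission imports Defs begin

locale pdc =
  fixes D :: "('o,'v,'h,'s,'z) dblcat_scheme"
  assumes pdc: "pseudo_double_category D"
begin

lemmas P = pdc[unfolded pseudo_double_category_def]
lemmas ax1 = P[THEN conjunct1]
lemmas r1 = P[THEN conjunct2]
lemmas ax2 = r1[THEN conjunct1]
lemmas r2 = r1[THEN conjunct2]
lemmas ax3 = r2[THEN conjunct1]
lemmas r3 = r2[THEN conjunct2]
lemmas ax4 = r3[THEN conjunct1]
lemmas r4 = r3[THEN conjunct2]
lemmas ax5 = r4[THEN conjunct1]
lemmas r5 = r4[THEN conjunct2]
lemmas ax6 = r5[THEN conjunct1]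
lemmas r6 = r5[THEN conjunct2]
lemmas ax7 = r6[THEN conjunct1]
lemmas r7 = r6[THEN conjunct2]
lemmas ax8 = r7[THEN conjunct1]
lemmas r8 = r7[THEN conjunct2]
lemmas ax9 = r8[THEN conjunct1]
lemmas r9 = r8[THEN conjunct2]
lemmas ax10 = r9[THEN conjunct1]
lemmas r10 = r9[THEN conjunct2]
lemmas ax11 = r10[THEN conjunct1]
lemmas r11 = r10[THEN conjunct2]
lemmas ax12 = r11[THEN conjunct1]
lemmas r12 = r11[THEN conjunct2]
lemmas ax13 = r12[THEN conjunct1]
lemmas r13 = r12[THEN conjunct2]
lemmas ax14 = r13[THEN conjunct1]
lemmas r14 = r13[THEN conjunct2]
lemmas ax15 = r14[THEN conjunct1]
lemmas r15 = r14[THEN conjunct2]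
lemmas ax16 = r15[THEN conjunct1]
lemmas r16 = r15[THEN conjunct2]
lemmas ax17 = r16[THEN conjunct1]
lemmas r17 = r16[THEN conjunct2]
lemmas ax18 = r17[THEN conjunct1]
lemmas r18 = r17[THEN conjunct2]
lemmas ax19 = r18[THEN conjunct1]
lemmas r19 = r18[THEN conjunct2]
lemmas ax20 = r19[THEN conjunct1]
lemmas r20 = r19[THEN conjunct2]
lemmas ax21 = r20[THEN conjunct1]
lemmas r21 = r20[THEN conjunct2]
lemmas ax22 = r21[THEN conjunct1]
lemmas r22 = r21[THEN conjunct2]
lemmas ax23 = r22[THEN conjunct1]
lemmas r23 = r22[THEN conjunct2]
lemmas ax24 = r23[THEN conjunct1]
lemmas r24 = r23[THEN conjunct2]
lemmas ax25 = r24[THEN conjunct1]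
lemmas r25 = r24[THEN conjunct2]
lemmas ax26 = r25[THEN conjunct1]
lemmas r26 = r25[THEN conjunct2]
lemmas ax27 = r26[THEN conjunct1]
lemmas r27 = r26[THEN conjunct2]
lemmas ax28 = r27

lemma vid_ty[simp]: "a \<in> Ob D \<Longrightarrow> vid D a \<in> VAr D" using ax1 by blast
lemma vid_dom[simp]: "a \<in> Ob D \<Longrightarrow> vdom D (vid D a) = a" using ax1 by blast
lemma vid_cod[simp]: "a \<in> Ob D \<Longrightarrow> vcod D (vid D a) = a" using ax1 by blast
lemma vdom_ty[simp]: "f \<in> VAr D \<Longrightarrow> vdom D f \<in> Ob D" using ax2 by blast
lemma vcod_ty[simp]: "f \<in> VAr D \<Longrightarrow> vcod D f \<in> Ob D" using ax2 by blast
lemma vcomp_ty[simp]: "f \<in> VAr D \<Longrightarrow> g \<in> VAr D \<Longrightarrow> vcod D f = vdom D g \<Longrightarrow> vcomp D g f \<in> VAr D" using ax3 by blast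
lemma vcomp_dom[simp]: "f \<in> VAr D \<Longrightarrow> g \<in> VAr D \<Longrightarrow> vcod D f = vdom D g \<Longrightarrow> vdom D (vcomp D g f) = vdom D f" using ax3 by blast
lemma vcomp_cod[simp]: "f \<in> VAr D \<Longrightarrow> g \<in> VAr D \<Longrightarrow> vcod D f = vdom D g \<Longrightarrow> vcod D (vcomp D g f) = vcod D g" using ax3 by blast
lemma vcomp_idr[simp]: "f \<in> VAr D \<Longrightarrow> vdom D f = a \<Longrightarrow> vcomp D f (vid D a) = f" using ax4 by blast
lemma vcomp_idl[simp]: "f \<in> VAr D \<Longrightarrow> vcod D f = a \<Longrightarrow> vcomp D (vid D a) f = f" using ax4 by blast
lemma vcomp_assoc[simp]: "f \<in> VAr D \<Longrightarrow> g \<in> VAr D \<Longrightarrow> h \<in> VAr D \<Longrightarrow> vcod D f = vdom D g \<Longrightarrow> vcod D g = vdom D h \<Longrightarrow>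
   vcomp D (vcomp D h g) f = vcomp D h (vcomp D g f)" using ax5 by metis

lemma sid_ty[simp]: "M \<in> HAr D \<Longrightarrow> sid D M \<in> Sq D" using ax6 by blast
lemma sid_dom[simp]: "M \<in> HAr D \<Longrightarrow> sdom D (sid D M) = M" using ax6 by blast
lemma sid_cod[simp]: "M \<in> HAr D \<Longrightarrow> scod D (sid D M) = M" using ax6 by blast
lemma sdom_ty[simp]: "a \<in> Sq D \<Longrightarrow> sdom D a \<in> HAr D" using ax7 by blast
lemma scod_ty[simp]: "a \<in> Sq D \<Longrightarrow> scod D a \<in> HAr D" using ax7 by blast
lemma scomp_ty[simp]: "a \<in> Sq D \<Longrightarrow> b \<in> Sq D \<Longrightarrow> scod D a = sdom D b \<Longrightarrow> scomp D b a \<in> Sq D" using ax8 by blast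
lemma scomp_dom[simp]: "a \<in> Sq D \<Longrightarrow> b \<in> Sq D \<Longrightarrow> scod D a = sdom D b \<Longrightarrow> sdom D (scomp D b a) = sdom D a" using ax8 by blast
lemma scomp_cod[simp]: "a \<in> Sq D \<Longrightarrow> b \<in> Sq D \<Longrightarrow> scod D a = sdom D b \<Longrightarrow> scod D (scomp D b a) = scod D b" using ax8 by blast
lemma scomp_idr[simp]: "a \<in> Sq D \<Longrightarrow> sdom D a = M \<Longrightarrow> scomp D a (sid D M) = a" using ax9 by blast
lemma scomp_idl[simp]: "a \<in> Sq D \<Longrightarrow> scod D a = M \<Longrightarrow> scomp D (sid D M) a = a" using ax9 by blast
lemma scomp_assoc[simp]: "a \<in> Sq D \<Longrightarrow> b \<in> Sq D \<Longrightarrow> c \<in> Sq D \<Longrightarrow> scod D a = sdom D b \<Longrightarrow> scod D b = sdom D c \<Longrightarrow>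
   scomp D (scomp D c b) a = scomp D c (scomp D b a)" using ax10 by metis
lemma hsrc_ty[simp]: "M \<in> HAr D \<Longrightarrow> hsrc D M \<in> Ob D" using ax11 by blast
lemma htgt_ty[simp]: "M \<in> HAr D \<Longrightarrow> htgt D M \<in> Ob D" using ax11 by blast
lemma sleft_ty[simp]: "a \<in> Sq D \<Longrightarrow> sleft D a \<in> VAr D" using ax12 by blast
lemma sright_ty[simp]: "a \<in> Sq D \<Longrightarrow> sright D a \<in> VAr D" using ax12 by blast
lemma sleft_dom[simp]: "a \<in> Sq D \<Longrightarrow> vdom D (sleft D a) = hsrc D (sdom D a)" using ax12 by blast
lemma sleft_cod[simp]: "a \<in> Sq D \<Longrightarrow> vcod D (sleft D a) = hsrc D (scod D a)" using ax12 by blast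
lemma sright_dom[simp]: "a \<in> Sq D \<Longrightarrow> vdom D (sright D a) = htgt D (sdom D a)" using ax12 by blast
lemma sright_cod[simp]: "a \<in> Sq D \<Longrightarrow> vcod D (sright D a) = htgt D (scod D a)" using ax12 by blast
lemma sid_left[simp]: "M \<in> HAr D \<Longrightarrow> sleft D (sid D M) = vid D (hsrc D M)" using ax13 by blast
lemma sid_right[simp]: "M \<in> HAr D \<Longrightarrow> sright D (sid D M) = vid D (htgt D M)" using ax13 by blast
lemma scomp_left[simp]: "a \<in> Sq D \<Longrightarrow> b \<in> Sq D \<Longrightarrow> scod D a = sdom D b \<Longrightarrow> sleft D (scomp D b a) = vcomp D (sleft D b) (sleft D a)" using ax14 by blast
lemma scomp_right[simp]: "a \<in> Sq D \<Longrightarrow> b \<in> Sq D \<Longrightarrow> scod D a = sdom D b \<Longrightarrow> sright D (scomp D b a) = vcomp D (sright D b) (sright D a)" using ax14 by blast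
lemma hunit_ty[simp]: "a \<in> Ob D \<Longrightarrow> hunit D a \<in> HAr D" using ax15 by blast
lemma hunit_src[simp]: "a \<in> Ob D \<Longrightarrow> hsrc D (hunit D a) = a" using ax15 by blast
lemma hunit_tgt[simp]: "a \<in> Ob D \<Longrightarrow> htgt D (hunit D a) = a" using ax15 by blast
lemma sunit_ty[simp]: "f \<in> VAr D \<Longrightarrow> sunit D f \<in> Sq D" using ax16 by blast
lemma sunit_dom[simp]: "f \<in> VAr D \<Longrightarrow> sdom D (sunit D f) = hunit D (vdom D f)" using ax16 by blast
lemma sunit_cod[simp]: "f \<in> VAr D \<Longrightarrow> scod D (sunit D f) = hunit D (vcod D f)" using ax16 by blast
lemma sunit_left[simp]: "f \<in> VAr D \<Longrightarrow> sleft D (sunit D f) = f" using ax16 by blast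
lemma sunit_right[simp]: "f \<in> VAr D \<Longrightarrow> sright D (sunit D f) = f" using ax16 by blast
lemma sunit_vid[simp]: "a \<in> Ob D \<Longrightarrow> sunit D (vid D a) = sid D (hunit D a)" using ax17 by blast
lemma sunit_vcomp: "f \<in> VAr D \<Longrightarrow> g \<in> VAr D \<Longrightarrow> vcod D f = vdom D g \<Longrightarrow> sunit D (vcomp D g f) = scomp D (sunit D g) (sunit D f)" using ax18 by blast
lemma hcomp_ty[simp]: "M \<in> HAr D \<Longrightarrow> N \<in> HAr D \<Longrightarrow> htgt D M = hsrc D N \<Longrightarrow> hcomp D N M \<in> HAr D" using ax19 by blast
lemma hcomp_src[simp]: "M \<in> HAr D \<Longrightarrow> N \<in> HAr D \<Longrightarrow> htgt D M = hsrc D N \<Longrightarrow> hsrc D (hcomp D N M) = hsrc D M" using ax19 by blast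
lemma hcomp_tgt[simp]: "M \<in> HAr D \<Longrightarrow> N \<in> HAr D \<Longrightarrow> htgt D M = hsrc D N \<Longrightarrow> htgt D (hcomp D N M) = htgt D N" using ax19 by blast
lemma shcomp_ty[simp]: "a \<in> Sq D \<Longrightarrow> b \<in> Sq D \<Longrightarrow> sright D a = sleft D b \<Longrightarrow> shcomp D b a \<in> Sq D" using ax20 by blast
lemma shcomp_dom[simp]: "a \<in> Sq D \<Longrightarrow> b \<in> Sq D \<Longrightarrow> sright D a = sleft D b \<Longrightarrow> sdom D (shcomp D b a) = hcomp D (sdom D b) (sdom D a)" using ax20 by blast
lemma shcomp_cod[simp]: "a \<in> Sq D \<Longrightarrow> b \<in> Sq D \<Longrightarrow> sright D a = sleft D b \<Longrightarrow> scod D (shcomp D b a) = hcomp D (scod D b) (scod D a)" using ax20 by blast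
lemma shcomp_left[simp]: "a \<in> Sq D \<Longrightarrow> b \<in> Sq D \<Longrightarrow> sright D a = sleft D b \<Longrightarrow> sleft D (shcomp D b a) = sleft D a" using ax20 by blast
lemma shcomp_right[simp]: "a \<in> Sq D \<Longrightarrow> b \<in> Sq D \<Longrightarrow> sright D a = sleft D b \<Longrightarrow> sright D (shcomp D b a) = sright D b" using ax20 by blast
lemma shcomp_sid[simp]: "M \<in> HAr D \<Longrightarrow> N \<in> HAr D \<Longrightarrow> htgt D M = hsrc D N \<Longrightarrow> shcomp D (sid D N) (sid D M) = sid D (hcomp D N M)" using ax21 by blast
lemma interchange: "a \<in> Sq D \<Longrightarrow> a' \<in> Sq D \<Longrightarrow> b \<in> Sq D \<Longrightarrow> b' \<in> Sq D \<Longrightarrow>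
      scod D a = sdom D a' \<Longrightarrow> scod D b = sdom D b' \<Longrightarrow>
      sright D a = sleft D b \<Longrightarrow> sright D a' = sleft D b' \<Longrightarrow>
      shcomp D (scomp D b' b) (scomp D a' a) = scomp D (shcomp D b' a') (shcomp D b a)" using ax22 by blast

definition ginv :: "'s \<Rightarrow> 'h \<Rightarrow> 'h \<Rightarrow> 's" where
  "ginv t X Y = (SOME p. p \<in> Sq D \<and> sdom D p = Y \<and> scod D p = X \<and> scomp D p t = sid D X \<and> scomp D t p = sid D Y)"

lemma ginv:
  assumes "glob_iso D t X Y"
  shows "ginv t X Y \<in> Sq D \<and> sdom D (ginv t X Y) = Y \<and> scod D (ginv t X Y) = X \<and>
    scomp D (ginv t X Y) t = sid D X \<and> scomp D t (ginv t X Y) = sid D Y"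
proof -
  from assms obtain p where "p \<in> Sq D \<and> sdom D p = Y \<and> scod D p = X \<and> scomp D p t = sid D X \<and> scomp D t p = sid D Y"
    unfolding glob_iso_def by blast
  then show ?thesis unfolding ginv_def by (rule someI)
qed

lemma ginv_sides:
  assumes "glob_iso D t X Y"
  shows "sleft D (ginv t X Y) = vid D (hsrc D X) \<and> sright D (ginv t X Y) = vid D (htgt D X) \<and>
     hsrc D Y = hsrc D X \<and> htgt D Y = htgt D X"
proof -
  have t: "t \<in> Sq D" "sdom D t = X" "scod D t = Y" "sleft D t = vid D (hsrc D X)" "sright D t = vid D (htgt D X)"
    using assms unfolding glob_iso_def by auto
  note g = ginv[OF assms]
  have X: "X \<in> HAr D" using t by (metis sdom_ty)
  have s1: "hsrc D Y = hsrc D X" using t X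
    by (metis hsrc_ty sleft_cod vid_cod)
  have s2: "htgt D Y = htgt D X" using t X
    by (metis htgt_ty sright_cod vid_cod)
  have "sleft D (scomp D (ginv t X Y) t) = vcomp D (sleft D (ginv t X Y)) (sleft D t)"
    using g t by (intro scomp_left) auto
  also have "... = sleft D (ginv t X Y)" using g t X s1 by simp
  finally have l: "sleft D (ginv t X Y) = vid D (hsrc D X)" using g X by simp
  have "sright D (scomp D (ginv t X Y) t) = vcomp D (sright D (ginv t X Y)) (sright D t)"
    using g t by (intro scomp_right) auto
  also have "... = sright D (ginv t X Y)" using g t X s2 by simp
  finally have r: "sright D (ginv t X Y) = vid D (htgt D X)" using g X by simp
  show ?thesis using l r s1 s2 by simp
qed


lemma gi: "glob_iso D t X Y \<Longrightarrow> t \<in> Sq D \<and> sdom D t = X \<and> scod D t = Y \<and>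
   sleft D t = vid D (hsrc D X) \<and> sright D t = vid D (htgt D X)"
  unfolding glob_iso_def by blast

lemma assoc_gi: "M \<in> HAr D \<Longrightarrow> N \<in> HAr D \<Longrightarrow> P \<in> HAr D \<Longrightarrow> htgt D M = hsrc D N \<Longrightarrow> htgt D N = hsrc D P \<Longrightarrow>
      glob_iso D (assoc D P N M) (hcomp D (hcomp D P N) M) (hcomp D P (hcomp D N M))"
  using ax23 by blast
lemma lunit_gi: "M \<in> HAr D \<Longrightarrow> glob_iso D (lunit D M) (hcomp D (hunit D (htgt D M)) M) M"
  using ax24 by blast
lemma runit_gi: "M \<in> HAr D \<Longrightarrow> glob_iso D (runit D M) (hcomp D M (hunit D (hsrc D M))) M"
  using ax24 by blast

definition "ainv P N M = ginv (assoc D P N M) (hcomp D (hcomp D P N) M) (hcomp D P (hcomp D N M))"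
definition "linv M = ginv (lunit D M) (hcomp D (hunit D (htgt D M)) M) M"
definition "rinv M = ginv (runit D M) (hcomp D M (hunit D (hsrc D M))) M"

context
  fixes M N P
  assumes H: "M \<in> HAr D" "N \<in> HAr D" "P \<in> HAr D" "htgt D M = hsrc D N" "htgt D N = hsrc D P"
begin
lemma assoc_ty[simp]: "assoc D P N M \<in> Sq D" using gi[OF assoc_gi[OF H]] by blast
lemma assoc_dom[simp]: "sdom D (assoc D P N M) = hcomp D (hcomp D P N) M" using gi[OF assoc_gi[OF H]] by blast
lemma assoc_cod[simp]: "scod D (assoc D P N M) = hcomp D P (hcomp D N M)" using gi[OF assoc_gi[OF H]] by blast
lemma assoc_left[simp]: "sleft D (assoc D P N M) = vid D (hsrc D M)" using gi[OF assoc_gi[OF H]] H by simp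
lemma assoc_right[simp]: "sright D (assoc D P N M) = vid D (htgt D P)" using gi[OF assoc_gi[OF H]] H by simp
lemma ainv_ty[simp]: "ainv P N M \<in> Sq D" using ginv[OF assoc_gi[OF H]] unfolding ainv_def by blast
lemma ainv_dom[simp]: "sdom D (ainv P N M) = hcomp D P (hcomp D N M)" using ginv[OF assoc_gi[OF H]] unfolding ainv_def by blast
lemma ainv_cod[simp]: "scod D (ainv P N M) = hcomp D (hcomp D P N) M" using ginv[OF assoc_gi[OF H]] unfolding ainv_def by blast
lemma ainv_left[simp]: "sleft D (ainv P N M) = vid D (hsrc D M)" using ginv_sides[OF assoc_gi[OF H]] H unfolding ainv_def by simp
lemma ainv_right[simp]: "sright D (ainv P N M) = vid D (htgt D P)" using ginv_sides[OF assoc_gi[OF H]] H unfolding ainv_def by simp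
lemma ainv_assoc[simp]: "scomp D (ainv P N M) (assoc D P N M) = sid D (hcomp D (hcomp D P N) M)" using ginv[OF assoc_gi[OF H]] unfolding ainv_def by blast
lemma assoc_ainv[simp]: "scomp D (assoc D P N M) (ainv P N M) = sid D (hcomp D P (hcomp D N M))" using ginv[OF assoc_gi[OF H]] unfolding ainv_def by blast
lemma ainv_assoc2[simp]: "x \<in> Sq D \<Longrightarrow> scod D x = hcomp D (hcomp D P N) M \<Longrightarrow> scomp D (ainv P N M) (scomp D (assoc D P N M) x) = x"
  using H by (simp flip: scomp_assoc)
lemma assoc_ainv2[simp]: "x \<in> Sq D \<Longrightarrow> scod D x = hcomp D P (hcomp D N M) \<Longrightarrow> scomp D (assoc D P N M) (scomp D (ainv P N M) x) = x"
  using H by (simp flip: scomp_assoc)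
end

context
  fixes M
  assumes H: "M \<in> HAr D"
begin
lemma lunit_ty[simp]: "lunit D M \<in> Sq D" using gi[OF lunit_gi[OF H]] by blast
lemma lunit_dom[simp]: "sdom D (lunit D M) = hcomp D (hunit D (htgt D M)) M" using gi[OF lunit_gi[OF H]] by blast
lemma lunit_cod[simp]: "scod D (lunit D M) = M" using gi[OF lunit_gi[OF H]] by blast
lemma lunit_left[simp]: "sleft D (lunit D M) = vid D (hsrc D M)" using gi[OF lunit_gi[OF H]] H by simp
lemma lunit_right[simp]: "sright D (lunit D M) = vid D (htgt D M)" using gi[OF lunit_gi[OF H]] H by simp
lemma linv_ty[simp]: "linv M \<in> Sq D" using ginv[OF lunit_gi[OF H]] unfolding linv_def by blast
lemma linv_dom[simp]: "sdom D (linv M) = M" using ginv[OF lunit_gi[OF H]] unfolding linv_def by blast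
lemma linv_cod[simp]: "scod D (linv M) = hcomp D (hunit D (htgt D M)) M" using ginv[OF lunit_gi[OF H]] unfolding linv_def by blast
lemma linv_left[simp]: "sleft D (linv M) = vid D (hsrc D M)" using ginv_sides[OF lunit_gi[OF H]] H unfolding linv_def by simp
lemma linv_right[simp]: "sright D (linv M) = vid D (htgt D M)" using ginv_sides[OF lunit_gi[OF H]] H unfolding linv_def by simp
lemma linv_lunit[simp]: "scomp D (linv M) (lunit D M) = sid D (hcomp D (hunit D (htgt D M)) M)" using ginv[OF lunit_gi[OF H]] unfolding linv_def by blast
lemma lunit_linv[simp]: "scomp D (lunit D M) (linv M) = sid D M" using ginv[OF lunit_gi[OF H]] unfolding linv_def by blast
lemma linv_lunit2[simp]: "x \<in> Sq D \<Longrightarrow> scod D x = hcomp D (hunit D (htgt D M)) M \<Longrightarrow> scomp D (linv M) (scomp D (lunit D M) x) = x"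
  using H by (simp flip: scomp_assoc)
lemma lunit_linv2[simp]: "x \<in> Sq D \<Longrightarrow> scod D x = M \<Longrightarrow> scomp D (lunit D M) (scomp D (linv M) x) = x"
  using H by (simp flip: scomp_assoc)
lemma runit_ty[simp]: "runit D M \<in> Sq D" using gi[OF runit_gi[OF H]] by blast
lemma runit_dom[simp]: "sdom D (runit D M) = hcomp D M (hunit D (hsrc D M))" using gi[OF runit_gi[OF H]] by blast
lemma runit_cod[simp]: "scod D (runit D M) = M" using gi[OF runit_gi[OF H]] by blast
lemma runit_left[simp]: "sleft D (runit D M) = vid D (hsrc D M)" using gi[OF runit_gi[OF H]] H by simp
lemma runit_right[simp]: "sright D (runit D M) = vid D (htgt D M)" using gi[OF runit_gi[OF H]] H by simp
lemma rinv_ty[simp]: "rinv M \<in> Sq D" using ginv[OF runit_gi[OF H]] unfolding rinv_def by blast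
lemma rinv_dom[simp]: "sdom D (rinv M) = M" using ginv[OF runit_gi[OF H]] unfolding rinv_def by blast
lemma rinv_cod[simp]: "scod D (rinv M) = hcomp D M (hunit D (hsrc D M))" using ginv[OF runit_gi[OF H]] unfolding rinv_def by blast
lemma rinv_left[simp]: "sleft D (rinv M) = vid D (hsrc D M)" using ginv_sides[OF runit_gi[OF H]] H unfolding rinv_def by simp
lemma rinv_right[simp]: "sright D (rinv M) = vid D (htgt D M)" using ginv_sides[OF runit_gi[OF H]] H unfolding rinv_def by simp
lemma rinv_runit[simp]: "scomp D (rinv M) (runit D M) = sid D (hcomp D M (hunit D (hsrc D M)))" using ginv[OF runit_gi[OF H]] unfolding rinv_def by blast
lemma runit_rinv[simp]: "scomp D (runit D M) (rinv M) = sid D M" using ginv[OF runit_gi[OF H]] unfolding rinv_def by blast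
lemma rinv_runit2[simp]: "x \<in> Sq D \<Longrightarrow> scod D x = hcomp D M (hunit D (hsrc D M)) \<Longrightarrow> scomp D (rinv M) (scomp D (runit D M) x) = x"
  using H by (simp flip: scomp_assoc)
lemma runit_rinv2[simp]: "x \<in> Sq D \<Longrightarrow> scod D x = M \<Longrightarrow> scomp D (runit D M) (scomp D (rinv M) x) = x"
  using H by (simp flip: scomp_assoc)
end

lemma assoc_nat: "a \<in> Sq D \<Longrightarrow> b \<in> Sq D \<Longrightarrow> c \<in> Sq D \<Longrightarrow> sright D a = sleft D b \<Longrightarrow> sright D b = sleft D c \<Longrightarrow>
      scomp D (assoc D (scod D c) (scod D b) (scod D a)) (shcomp D (shcomp D c b) a) =
      scomp D (shcomp D c (shcomp D b a)) (assoc D (sdom D c) (sdom D b) (sdom D a))"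
  using ax25 by blast
lemma lunit_nat: "a \<in> Sq D \<Longrightarrow>
      scomp D (lunit D (scod D a)) (shcomp D (sunit D (sright D a)) a) = scomp D a (lunit D (sdom D a))"
  using ax26 by blast
lemma runit_nat: "a \<in> Sq D \<Longrightarrow>
      scomp D (runit D (scod D a)) (shcomp D a (sunit D (sleft D a))) = scomp D a (runit D (sdom D a))"
  using ax26 by blast
lemma pentagon: "M \<in> HAr D \<Longrightarrow> N \<in> HAr D \<Longrightarrow> P \<in> HAr D \<Longrightarrow> Q \<in> HAr D \<Longrightarrow>
      htgt D M = hsrc D N \<Longrightarrow> htgt D N = hsrc D P \<Longrightarrow> htgt D P = hsrc D Q \<Longrightarrow>
      scomp D (assoc D Q P (hcomp D N M)) (assoc D (hcomp D Q P) N M) =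
      scomp D (shcomp D (sid D Q) (assoc D P N M))
        (scomp D (assoc D Q (hcomp D P N) M) (shcomp D (assoc D Q P N) (sid D M)))"
  using ax27 by blast
lemma triangle: "M \<in> HAr D \<Longrightarrow> N \<in> HAr D \<Longrightarrow> htgt D M = hsrc D N \<Longrightarrow>
      scomp D (shcomp D (sid D N) (lunit D M)) (assoc D N (hunit D (htgt D M)) M) =
      shcomp D (runit D N) (sid D M)"
  using ax28 by blast

lemma rcancel:
  assumes "f \<in> Sq D" "g \<in> Sq D" "sdom D f = sdom D g" "scod D f = scod D g" "sleft D f = sleft D g"
    "shcomp D f (sunit D (sleft D f)) = shcomp D g (sunit D (sleft D g))"
  shows "f = g"
proof -
  have "scomp D f (runit D (sdom D f)) = scomp D g (runit D (sdom D g))"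
    using runit_nat[OF assms(1)] runit_nat[OF assms(2)] assms by simp
  then have "scomp D (scomp D f (runit D (sdom D f))) (rinv (sdom D f)) = scomp D (scomp D g (runit D (sdom D f))) (rinv (sdom D f))"
    using assms by simp
  then show ?thesis using assms by simp
qed

lemma lcancel:
  assumes "f \<in> Sq D" "g \<in> Sq D" "sdom D f = sdom D g" "scod D f = scod D g" "sright D f = sright D g"
    "shcomp D (sunit D (sright D f)) f = shcomp D (sunit D (sright D g)) g"
  shows "f = g"
proof -
  have "scomp D f (lunit D (sdom D f)) = scomp D g (lunit D (sdom D g))"
    using lunit_nat[OF assms(1)] lunit_nat[OF assms(2)] assms by simp
  then have "scomp D (scomp D f (lunit D (sdom D f))) (linv (sdom D f)) = scomp D (scomp D g (lunit D (sdom D f))) (linv (sdom D f))"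
    using assms by simp
  then show ?thesis using assms by simp
qed

lemma kelly_r:
  assumes X: "X \<in> HAr D" and Y: "Y \<in> HAr D" and XY: "htgt D Y = hsrc D X"
  shows "runit D (hcomp D X Y) = scomp D (shcomp D (sid D X) (runit D Y)) (assoc D X Y (hunit D (hsrc D Y)))"
proof -
  let ?I = "hunit D (hsrc D Y)"
  let ?XY = "hcomp D X Y"
  have I: "?I \<in> HAr D" "hsrc D ?I = hsrc D Y" "htgt D ?I = hsrc D Y" using Y by auto
  have E1: "shcomp D (runit D ?XY) (sid D ?I) = scomp D (shcomp D (sid D ?XY) (lunit D ?I)) (assoc D ?XY ?I ?I)"
    using triangle[of ?I ?XY] X Y XY by simp
  have E2: "scomp D (assoc D X Y ?I) (shcomp D (sid D ?XY) (lunit D ?I)) =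
      scomp D (shcomp D (sid D X) (shcomp D (sid D Y) (lunit D ?I))) (assoc D X Y (hcomp D ?I ?I))"
    using assoc_nat[of "lunit D ?I" "sid D Y" "sid D X"] X Y XY by simp
  have E3: "scomp D (assoc D X Y (hcomp D ?I ?I)) (assoc D ?XY ?I ?I) =
      scomp D (shcomp D (sid D X) (assoc D Y ?I ?I))
        (scomp D (assoc D X (hcomp D Y ?I) ?I) (shcomp D (assoc D X Y ?I) (sid D ?I)))"
    using pentagon[of ?I ?I Y X] X Y XY by simp
  have E4: "scomp D (shcomp D (sid D Y) (lunit D ?I)) (assoc D Y ?I ?I) = shcomp D (runit D Y) (sid D ?I)"
    using triangle[of ?I Y] X Y XY by simp
  have E4': "scomp D (shcomp D (sid D X) (shcomp D (sid D Y) (lunit D ?I))) (shcomp D (sid D X) (assoc D Y ?I ?I))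
      = shcomp D (sid D X) (shcomp D (runit D Y) (sid D ?I))"
    using interchange[of "assoc D Y ?I ?I" "shcomp D (sid D Y) (lunit D ?I)" "sid D X" "sid D X"] E4 X Y XY by simp
  have E5: "scomp D (assoc D X Y ?I) (shcomp D (shcomp D (sid D X) (runit D Y)) (sid D ?I)) =
      scomp D (shcomp D (sid D X) (shcomp D (runit D Y) (sid D ?I))) (assoc D X (hcomp D Y ?I) ?I)"
    using assoc_nat[of "sid D ?I" "runit D Y" "sid D X"] X Y XY by simp
  have E6: "scomp D (shcomp D (shcomp D (sid D X) (runit D Y)) (sid D ?I)) (shcomp D (assoc D X Y ?I) (sid D ?I))
     = shcomp D (scomp D (shcomp D (sid D X) (runit D Y)) (assoc D X Y ?I)) (sid D ?I)"
    using interchange[of "sid D ?I" "sid D ?I" "assoc D X Y ?I" "shcomp D (sid D X) (runit D Y)"] X Y XY by simp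
  have "scomp D (assoc D X Y ?I) (shcomp D (runit D ?XY) (sid D ?I)) =
        scomp D (assoc D X Y ?I) (shcomp D (scomp D (shcomp D (sid D X) (runit D Y)) (assoc D X Y ?I)) (sid D ?I))"
  proof -
    have "scomp D (assoc D X Y ?I) (shcomp D (runit D ?XY) (sid D ?I))
       = scomp D (scomp D (assoc D X Y ?I) (shcomp D (sid D ?XY) (lunit D ?I))) (assoc D ?XY ?I ?I)"
      unfolding E1 using X Y XY by simp
    also have "... = scomp D (shcomp D (sid D X) (shcomp D (sid D Y) (lunit D ?I)))
         (scomp D (assoc D X Y (hcomp D ?I ?I)) (assoc D ?XY ?I ?I))"
      unfolding E2 using X Y XY by simp
    also have "... = scomp D (scomp D (shcomp D (sid D X) (shcomp D (sid D Y) (lunit D ?I))) (shcomp D (sid D X) (assoc D Y ?I ?I)))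
        (scomp D (assoc D X (hcomp D Y ?I) ?I) (shcomp D (assoc D X Y ?I) (sid D ?I)))"
      unfolding E3 using X Y XY by simp
    also have "... = scomp D (scomp D (shcomp D (sid D X) (shcomp D (runit D Y) (sid D ?I))) (assoc D X (hcomp D Y ?I) ?I))
         (shcomp D (assoc D X Y ?I) (sid D ?I))"
      unfolding E4' using X Y XY by simp
    also have "... = scomp D (scomp D (assoc D X Y ?I) (shcomp D (shcomp D (sid D X) (runit D Y)) (sid D ?I)))
         (shcomp D (assoc D X Y ?I) (sid D ?I))"
      unfolding E5 by simp
    also have "... = scomp D (assoc D X Y ?I) (scomp D (shcomp D (shcomp D (sid D X) (runit D Y)) (sid D ?I))
         (shcomp D (assoc D X Y ?I) (sid D ?I)))"
      using X Y XY by simp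
    also have "... = scomp D (assoc D X Y ?I) (shcomp D (scomp D (shcomp D (sid D X) (runit D Y)) (assoc D X Y ?I)) (sid D ?I))"
      unfolding E6 by simp
    finally show ?thesis .
  qed
  then have "scomp D (ainv X Y ?I) (scomp D (assoc D X Y ?I) (shcomp D (runit D ?XY) (sid D ?I))) =
        scomp D (ainv X Y ?I) (scomp D (assoc D X Y ?I) (shcomp D (scomp D (shcomp D (sid D X) (runit D Y)) (assoc D X Y ?I)) (sid D ?I)))"
    by simp
  then have F: "shcomp D (runit D ?XY) (sid D ?I) = shcomp D (scomp D (shcomp D (sid D X) (runit D Y)) (assoc D X Y ?I)) (sid D ?I)"
    using X Y XY by simp
  show ?thesis
    apply (rule rcancel)
    using F X Y XY by simp_all
qed

lemma kelly_l:
  assumes X: "X \<in> HAr D" and Y: "Y \<in> HAr D" and XY: "htgt D Y = hsrc D X"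
  shows "scomp D (lunit D (hcomp D X Y)) (assoc D (hunit D (htgt D X)) X Y) = shcomp D (lunit D X) (sid D Y)"
proof -
  let ?I = "hunit D (htgt D X)"
  let ?XY = "hcomp D X Y"
  let ?K = "scomp D (lunit D (hcomp D X Y)) (assoc D ?I X Y)"
  let ?L = "shcomp D (lunit D X) (sid D Y)"
  let ?P1 = "assoc D ?I (hcomp D ?I X) Y"
  let ?P2 = "shcomp D (assoc D ?I ?I X) (sid D Y)"
  have I: "?I \<in> HAr D" "hsrc D ?I = htgt D X" "htgt D ?I = htgt D X" using X by auto
  have E3: "scomp D (assoc D ?I ?I ?XY) (assoc D (hcomp D ?I ?I) X Y) =
      scomp D (shcomp D (sid D ?I) (assoc D ?I X Y)) (scomp D ?P1 ?P2)"
    using pentagon[of Y X ?I ?I] X Y XY by simp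
  have T1: "scomp D (shcomp D (sid D ?I) (lunit D ?XY)) (assoc D ?I ?I ?XY) = shcomp D (runit D ?I) (sid D ?XY)"
    using triangle[of ?XY ?I] X Y XY by simp
  have N1: "scomp D (assoc D ?I X Y) (shcomp D (shcomp D (runit D ?I) (sid D X)) (sid D Y)) =
      scomp D (shcomp D (runit D ?I) (sid D ?XY)) (assoc D (hcomp D ?I ?I) X Y)"
    using assoc_nat[of "sid D Y" "sid D X" "runit D ?I"] X Y XY by simp
  have T2: "scomp D (shcomp D (sid D ?I) (lunit D X)) (assoc D ?I ?I X) = shcomp D (runit D ?I) (sid D X)"
    using triangle[of X ?I] X Y XY by simp
  have I2: "shcomp D (scomp D (shcomp D (sid D ?I) (lunit D X)) (assoc D ?I ?I X)) (sid D Y) =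
      scomp D (shcomp D (shcomp D (sid D ?I) (lunit D X)) (sid D Y)) ?P2"
    using interchange[of "sid D Y" "sid D Y" "assoc D ?I ?I X" "shcomp D (sid D ?I) (lunit D X)"] X Y XY by simp
  have N2: "scomp D (assoc D ?I X Y) (shcomp D (shcomp D (sid D ?I) (lunit D X)) (sid D Y)) =
      scomp D (shcomp D (sid D ?I) ?L) ?P1"
    using assoc_nat[of "sid D Y" "lunit D X" "sid D ?I"] X Y XY by simp
  have I3: "shcomp D (sid D ?I) ?K = scomp D (shcomp D (sid D ?I) (lunit D ?XY)) (shcomp D (sid D ?I) (assoc D ?I X Y))"
    using interchange[of "assoc D ?I X Y" "lunit D ?XY" "sid D ?I" "sid D ?I"] X Y XY by simp
  have C: "scomp D (shcomp D (sid D ?I) ?K) (scomp D ?P1 ?P2) = scomp D (shcomp D (sid D ?I) ?L) (scomp D ?P1 ?P2)"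
  proof -
    have "scomp D (shcomp D (sid D ?I) ?K) (scomp D ?P1 ?P2) =
        scomp D (shcomp D (sid D ?I) (lunit D ?XY)) (scomp D (shcomp D (sid D ?I) (assoc D ?I X Y)) (scomp D ?P1 ?P2))"
      unfolding I3 using X Y XY by simp
    also have "... = scomp D (shcomp D (sid D ?I) (lunit D ?XY)) (scomp D (assoc D ?I ?I ?XY) (assoc D (hcomp D ?I ?I) X Y))"
      unfolding E3 by simp
    also have "... = scomp D (scomp D (shcomp D (sid D ?I) (lunit D ?XY)) (assoc D ?I ?I ?XY)) (assoc D (hcomp D ?I ?I) X Y)"
      using X Y XY by simp
    also have "... = scomp D (assoc D ?I X Y) (shcomp D (shcomp D (runit D ?I) (sid D X)) (sid D Y))"
      unfolding T1 N1 by simp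
    also have "... = scomp D (assoc D ?I X Y) (scomp D (shcomp D (shcomp D (sid D ?I) (lunit D X)) (sid D Y)) ?P2)"
      unfolding T2[symmetric] I2 by simp
    also have "... = scomp D (scomp D (assoc D ?I X Y) (shcomp D (shcomp D (sid D ?I) (lunit D X)) (sid D Y))) ?P2"
      using X Y XY by simp
    also have "... = scomp D (shcomp D (sid D ?I) ?L) (scomp D ?P1 ?P2)"
      unfolding N2 using X Y XY by simp
    finally show ?thesis .
  qed
  have P2inv: "scomp D ?P2 (shcomp D (ainv ?I ?I X) (sid D Y)) = sid D (hcomp D (hcomp D ?I (hcomp D ?I X)) Y)"
    using interchange[of "shcomp D (ainv ?I ?I X) (sid D Y)" ] 
    using interchange[of "sid D Y" "sid D Y" "ainv ?I ?I X" "assoc D ?I ?I X"] X Y XY by simp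
  have "scomp D (scomp D (shcomp D (sid D ?I) ?K) (scomp D ?P1 ?P2)) (scomp D (shcomp D (ainv ?I ?I X) (sid D Y)) (ainv ?I (hcomp D ?I X) Y))
     = scomp D (scomp D (shcomp D (sid D ?I) ?L) (scomp D ?P1 ?P2)) (scomp D (shcomp D (ainv ?I ?I X) (sid D Y)) (ainv ?I (hcomp D ?I X) Y))"
    unfolding C ..
  have P2inv2: "scomp D ?P2 (scomp D (shcomp D (ainv ?I ?I X) (sid D Y)) x) = x"
    if "x \<in> Sq D" "scod D x = hcomp D (hcomp D ?I (hcomp D ?I X)) Y" for x
  proof -
    have "scomp D ?P2 (scomp D (shcomp D (ainv ?I ?I X) (sid D Y)) x) = scomp D (scomp D ?P2 (shcomp D (ainv ?I ?I X) (sid D Y))) x"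
      using that X Y XY by (intro scomp_assoc[symmetric]) simp_all
    also have "... = x" unfolding P2inv using that by simp
    finally show ?thesis .
  qed
  from this[of "ainv ?I (hcomp D ?I X) Y"]
  have P12: "scomp D ?P1 (scomp D ?P2 (scomp D (shcomp D (ainv ?I ?I X) (sid D Y)) (ainv ?I (hcomp D ?I X) Y))) =
      sid D (hcomp D ?I (hcomp D (hcomp D ?I X) Y))"
  proof -
    have "scomp D ?P2 (scomp D (shcomp D (ainv ?I ?I X) (sid D Y)) (ainv ?I (hcomp D ?I X) Y)) = ainv ?I (hcomp D ?I X) Y"
      using X Y XY by (intro P2inv2) simp_all
    then show ?thesis using X Y XY by (simp only:) simp
  qed
  have F: "shcomp D (sid D ?I) ?K = shcomp D (sid D ?I) ?L"
  proof -
    have "scomp D (scomp D (shcomp D (sid D ?I) ?K) (scomp D ?P1 ?P2)) (scomp D (shcomp D (ainv ?I ?I X) (sid D Y)) (ainv ?I (hcomp D ?I X) Y))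
       = scomp D (shcomp D (sid D ?I) ?K) (scomp D ?P1 (scomp D ?P2 (scomp D (shcomp D (ainv ?I ?I X) (sid D Y)) (ainv ?I (hcomp D ?I X) Y))))"
      using X Y XY by (simp del: scomp_assoc add: scomp_assoc)
    also have "... = shcomp D (sid D ?I) ?K" unfolding P12 using X Y XY by simp
    finally have 1: "scomp D (scomp D (shcomp D (sid D ?I) ?K) (scomp D ?P1 ?P2)) (scomp D (shcomp D (ainv ?I ?I X) (sid D Y)) (ainv ?I (hcomp D ?I X) Y))
       = shcomp D (sid D ?I) ?K" .
    have "scomp D (scomp D (shcomp D (sid D ?I) ?L) (scomp D ?P1 ?P2)) (scomp D (shcomp D (ainv ?I ?I X) (sid D Y)) (ainv ?I (hcomp D ?I X) Y))
       = scomp D (shcomp D (sid D ?I) ?L) (scomp D ?P1 (scomp D ?P2 (scomp D (shcomp D (ainv ?I ?I X) (sid D Y)) (ainv ?I (hcomp D ?I X) Y))))"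
      using X Y XY by (simp del: scomp_assoc add: scomp_assoc)
    also have "... = shcomp D (sid D ?I) ?L" unfolding P12 using X Y XY by simp
    finally have 2: "scomp D (scomp D (shcomp D (sid D ?I) ?L) (scomp D ?P1 ?P2)) (scomp D (shcomp D (ainv ?I ?I X) (sid D Y)) (ainv ?I (hcomp D ?I X) Y))
       = shcomp D (sid D ?I) ?L" .
    have "shcomp D (sid D ?I) ?K = scomp D (scomp D (shcomp D (sid D ?I) ?K) (scomp D ?P1 ?P2)) (scomp D (shcomp D (ainv ?I ?I X) (sid D Y)) (ainv ?I (hcomp D ?I X) Y))"
      by (rule 1[symmetric])
    also have "... = scomp D (scomp D (shcomp D (sid D ?I) ?L) (scomp D ?P1 ?P2)) (scomp D (shcomp D (ainv ?I ?I X) (sid D Y)) (ainv ?I (hcomp D ?I X) Y))"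
      by (simp only: C)
    also have "... = shcomp D (sid D ?I) ?L" by (rule 2)
    finally show ?thesis .
  qed
  show ?thesis
    apply (rule lcancel)
    using F X Y XY by simp_all
qed

definition cart :: "'s \<Rightarrow> bool" where
  "cart e \<longleftrightarrow> e \<in> Sq D \<and> (\<forall>a g g'. a \<in> Sq D \<and> scod D a = scod D e \<and> g \<in> VAr D \<and> g' \<in> VAr D \<and>
      vcod D g = hsrc D (sdom D e) \<and> vcod D g' = htgt D (sdom D e) \<and>
      sleft D a = vcomp D (sleft D e) g \<and> sright D a = vcomp D (sright D e) g' \<longrightarrow>
      (\<exists>!b. b \<in> Sq D \<and> scod D b = sdom D e \<and> sleft D b = g \<and> sright D b = g' \<and> scomp D e b = a))"

lemma restr_left:
  assumes N: "N \<in> HAr D" and f: "f \<in> VAr D" "vcod D f = hsrc D N"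
    and fh: "fh \<in> HAr D" "hsrc D fh = vdom D f" "htgt D fh = vcod D f"
    and p1: "p1 \<in> Sq D" "sdom D p1 = fh" "scod D p1 = hunit D (vcod D f)" "sleft D p1 = f" "sright D p1 = vid D (vcod D f)"
    and p2: "p2 \<in> Sq D" "sdom D p2 = hunit D (vdom D f)" "scod D p2 = fh" "sleft D p2 = vid D (vdom D f)" "sright D p2 = f"
    and p12: "scomp D p1 p2 = sunit D f"
    and p1p2: "scomp D (lunit D fh) (shcomp D p1 p2) = runit D fh"
  defines "e \<equiv> scomp D (runit D N) (shcomp D (sid D N) p1)"
  shows "e \<in> Sq D \<and> sdom D e = hcomp D N fh \<and> scod D e = N \<and> sleft D e = f \<and> sright D e = vid D (htgt D N) \<and> cart e"
proof -
  note H = N f fh p1 p2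
  have e: "e \<in> Sq D" "sdom D e = hcomp D N fh" "scod D e = N" "sleft D e = f" "sright D e = vid D (htgt D N)"
    unfolding e_def using H by simp_all
  have KI: "shcomp D e p2 = runit D (hcomp D N fh)"
  proof -
    have "shcomp D e p2 = shcomp D e (scomp D (sid D fh) p2)" using H by simp
    also have "... = scomp D (shcomp D (runit D N) (sid D fh)) (shcomp D (shcomp D (sid D N) p1) p2)"
      unfolding e_def using H by (intro interchange) simp_all
    also have "... = scomp D (shcomp D (runit D N) (sid D fh))
        (scomp D (ainv N (hunit D (hsrc D N)) fh) (scomp D (assoc D N (hunit D (hsrc D N)) fh) (shcomp D (shcomp D (sid D N) p1) p2)))"
      using H by simp
    also have "... = scomp D (shcomp D (runit D N) (sid D fh))
        (scomp D (ainv N (hunit D (hsrc D N)) fh) (scomp D (shcomp D (sid D N) (shcomp D p1 p2)) (assoc D N fh (hunit D (vdom D f)))))"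
      using assoc_nat[of p2 p1 "sid D N"] H by simp
    also have "... = scomp D (scomp D (shcomp D (runit D N) (sid D fh)) (ainv N (hunit D (hsrc D N)) fh))
        (scomp D (shcomp D (sid D N) (shcomp D p1 p2)) (assoc D N fh (hunit D (vdom D f))))"
      using H by simp
    also have "scomp D (shcomp D (runit D N) (sid D fh)) (ainv N (hunit D (hsrc D N)) fh) = shcomp D (sid D N) (lunit D fh)"
    proof -
      have "scomp D (shcomp D (runit D N) (sid D fh)) (ainv N (hunit D (hsrc D N)) fh) =
         scomp D (scomp D (shcomp D (sid D N) (lunit D fh)) (assoc D N (hunit D (htgt D fh)) fh)) (ainv N (hunit D (hsrc D N)) fh)"
        using triangle[of fh N] H by simp
      also have "... = shcomp D (sid D N) (lunit D fh)" using H by simp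
      finally show ?thesis .
    qed
    also have "scomp D (shcomp D (sid D N) (lunit D fh)) (scomp D (shcomp D (sid D N) (shcomp D p1 p2)) (assoc D N fh (hunit D (vdom D f))))
       = scomp D (scomp D (shcomp D (sid D N) (lunit D fh)) (shcomp D (sid D N) (shcomp D p1 p2))) (assoc D N fh (hunit D (vdom D f)))"
      using H by simp
    also have "scomp D (shcomp D (sid D N) (lunit D fh)) (shcomp D (sid D N) (shcomp D p1 p2)) = shcomp D (sid D N) (runit D fh)"
      using interchange[of "shcomp D p1 p2" "lunit D fh" "sid D N" "sid D N"] H p1p2 by simp
    also have "scomp D (shcomp D (sid D N) (runit D fh)) (assoc D N fh (hunit D (vdom D f))) = runit D (hcomp D N fh)"
      using kelly_r[of N fh] H by simp
    finally show ?thesis .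
  qed
  have "cart e"
    unfolding cart_def
  proof (intro conjI allI impI)
    show "e \<in> Sq D" by (rule e)
    fix a g g'
    assume A: "a \<in> Sq D \<and> scod D a = scod D e \<and> g \<in> VAr D \<and> g' \<in> VAr D \<and>
      vcod D g = hsrc D (sdom D e) \<and> vcod D g' = htgt D (sdom D e) \<and>
      sleft D a = vcomp D (sleft D e) g \<and> sright D a = vcomp D (sright D e) g'"
    then have a: "a \<in> Sq D" "scod D a = N" "g \<in> VAr D" "g' \<in> VAr D" "vcod D g = vdom D f" "vcod D g' = htgt D N"
      "sleft D a = vcomp D f g" "sright D a = g'" using e H by auto
    have M: "hsrc D (sdom D a) = vdom D g" "htgt D (sdom D a) = vdom D g'"
      using sleft_dom[OF a(1)] sright_dom[OF a(1)] a H by simp_all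
    let ?b = "scomp D (shcomp D a (scomp D p2 (sunit D g))) (rinv (sdom D a))"
    show "\<exists>!b. b \<in> Sq D \<and> scod D b = sdom D e \<and> sleft D b = g \<and> sright D b = g' \<and> scomp D e b = a"
    proof (rule ex1I[where a = ?b])
      have b: "?b \<in> Sq D" "scod D ?b = sdom D e" "sleft D ?b = g" "sright D ?b = g'"
        using a H M e by simp_all
      have "scomp D e ?b = a"
      proof -
        have IC: "scomp D (shcomp D (sid D N) p1) (shcomp D a (scomp D p2 (sunit D g))) = shcomp D (scomp D (sid D N) a) (scomp D p1 (scomp D p2 (sunit D g)))"
          using a H M by (intro interchange[symmetric]) simp_all
        have "scomp D e ?b = scomp D (runit D N) (scomp D (scomp D (shcomp D (sid D N) p1) (shcomp D a (scomp D p2 (sunit D g)))) (rinv (sdom D a)))"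
          unfolding e_def using a H M by simp
        also have "... = scomp D (runit D N) (scomp D (shcomp D (scomp D (sid D N) a) (scomp D p1 (scomp D p2 (sunit D g)))) (rinv (sdom D a)))"
          unfolding IC ..
        also have "... = scomp D (runit D N) (scomp D (shcomp D a (sunit D (sleft D a))) (rinv (sdom D a)))"
          using a H M p12 by (simp add: sunit_vcomp flip: scomp_assoc)
        also have "... = scomp D (scomp D a (runit D (sdom D a))) (rinv (sdom D a))"
          using runit_nat[OF a(1)] a H M by (simp flip: scomp_assoc)
        also have "... = a" using a by simp
        finally show ?thesis .
      qed
      then show "?b \<in> Sq D \<and> scod D ?b = sdom D e \<and> sleft D ?b = g \<and> sright D ?b = g' \<and> scomp D e ?b = a"
        using b by simp
    next
      fix b assume B: "b \<in> Sq D \<and> scod D b = sdom D e \<and> sleft D b = g \<and> sright D b = g' \<and> scomp D e b = a"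
      then have b: "b \<in> Sq D" "scod D b = hcomp D N fh" "sleft D b = g" "sright D b = g'" "scomp D e b = a"
        using e by auto
      have bd: "sdom D b = sdom D a" using b e by (metis scomp_dom)
      have "shcomp D a (scomp D p2 (sunit D g)) = scomp D (shcomp D e p2) (shcomp D b (sunit D g))"
        unfolding b(5)[symmetric] using b e H a by (intro interchange) simp_all
      also have "... = scomp D b (runit D (sdom D a))"
        unfolding KI using runit_nat[OF b(1)] b bd e H a by simp
      finally have "shcomp D a (scomp D p2 (sunit D g)) = scomp D b (runit D (sdom D a))" .
      then have "?b = scomp D (scomp D b (runit D (sdom D a))) (rinv (sdom D a))" by simp
      also have "... = b" using b bd a by simp
      finally show "b = ?b" by simp
    qed
  qed
  then show ?thesis using e by simp
qed

lemma restr_right: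
  assumes N: "N \<in> HAr D" and f: "f \<in> VAr D" "vcod D f = htgt D N"
    and fc: "fc \<in> HAr D" "hsrc D fc = vcod D f" "htgt D fc = vdom D f"
    and q1: "q1 \<in> Sq D" "sdom D q1 = fc" "scod D q1 = hunit D (vcod D f)" "sleft D q1 = vid D (vcod D f)" "sright D q1 = f"
    and q2: "q2 \<in> Sq D" "sdom D q2 = hunit D (vdom D f)" "scod D q2 = fc" "sleft D q2 = f" "sright D q2 = vid D (vdom D f)"
    and q12: "scomp D q1 q2 = sunit D f"
    and q2q1: "scomp D (runit D fc) (shcomp D q2 q1) = lunit D fc"
  defines "e \<equiv> scomp D (lunit D N) (shcomp D q1 (sid D N))"
  shows "e \<in> Sq D \<and> sdom D e = hcomp D fc N \<and> scod D e = N \<and> sleft D e = vid D (hsrc D N) \<and> sright D e = f \<and> cart e"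
proof -
  note H = N f fc q1 q2
  have e: "e \<in> Sq D" "sdom D e = hcomp D fc N" "scod D e = N" "sleft D e = vid D (hsrc D N)" "sright D e = f"
    unfolding e_def using H by simp_all
  have NAT: "scomp D (assoc D fc (hunit D (htgt D N)) N) (shcomp D (shcomp D q2 q1) (sid D N)) =
     scomp D (shcomp D q2 (shcomp D q1 (sid D N))) (assoc D (hunit D (vdom D f)) fc N)"
    using assoc_nat[of "sid D N" q1 q2] H by simp
  have TRI: "scomp D (shcomp D (sid D fc) (lunit D N)) (assoc D fc (hunit D (htgt D N)) N) = shcomp D (runit D fc) (sid D N)"
    using triangle[of N fc] H by simp
  have IC2: "scomp D (shcomp D (runit D fc) (sid D N)) (shcomp D (shcomp D q2 q1) (sid D N)) = shcomp D (lunit D fc) (sid D N)"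
    using interchange[of "sid D N" "sid D N" "shcomp D q2 q1" "runit D fc"] H q2q1 by simp
  have KL: "scomp D (lunit D (hcomp D fc N)) (assoc D (hunit D (vdom D f)) fc N) = shcomp D (lunit D fc) (sid D N)"
    using kelly_l[of fc N] H by simp
  have KI: "shcomp D q2 e = lunit D (hcomp D fc N)"
  proof -
    have "shcomp D q2 e = shcomp D (scomp D (sid D fc) q2) e" using H by simp
    also have "... = scomp D (shcomp D (sid D fc) (lunit D N)) (shcomp D q2 (shcomp D q1 (sid D N)))"
      unfolding e_def using H by (intro interchange) simp_all
    also have "... = scomp D (shcomp D (sid D fc) (lunit D N)) (scomp D (scomp D (shcomp D q2 (shcomp D q1 (sid D N))) (assoc D (hunit D (vdom D f)) fc N))
        (ainv (hunit D (vdom D f)) fc N))"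
      using H by simp
    also have "... = scomp D (shcomp D (sid D fc) (lunit D N)) (scomp D (scomp D (assoc D fc (hunit D (htgt D N)) N) (shcomp D (shcomp D q2 q1) (sid D N)))
        (ainv (hunit D (vdom D f)) fc N))"
      unfolding NAT ..
    also have "... = scomp D (scomp D (shcomp D (sid D fc) (lunit D N)) (assoc D fc (hunit D (htgt D N)) N))
         (scomp D (shcomp D (shcomp D q2 q1) (sid D N)) (ainv (hunit D (vdom D f)) fc N))"
      using H by simp
    also have "... = scomp D (shcomp D (runit D fc) (sid D N))
         (scomp D (shcomp D (shcomp D q2 q1) (sid D N)) (ainv (hunit D (vdom D f)) fc N))"
      unfolding TRI ..
    also have "... = scomp D (scomp D (shcomp D (runit D fc) (sid D N)) (shcomp D (shcomp D q2 q1) (sid D N))) (ainv (hunit D (vdom D f)) fc N)"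
      using H by simp
    also have "... = scomp D (shcomp D (lunit D fc) (sid D N)) (ainv (hunit D (vdom D f)) fc N)"
      unfolding IC2 ..
    also have "... = scomp D (scomp D (lunit D (hcomp D fc N)) (assoc D (hunit D (vdom D f)) fc N)) (ainv (hunit D (vdom D f)) fc N)"
      unfolding KL ..
    also have "... = lunit D (hcomp D fc N)" using H by simp
    finally show ?thesis .
  qed
  have "cart e"
    unfolding cart_def
  proof (intro conjI allI impI)
    show "e \<in> Sq D" by (rule e)
    fix a g g'
    assume A: "a \<in> Sq D \<and> scod D a = scod D e \<and> g \<in> VAr D \<and> g' \<in> VAr D \<and>
      vcod D g = hsrc D (sdom D e) \<and> vcod D g' = htgt D (sdom D e) \<and>
      sleft D a = vcomp D (sleft D e) g \<and> sright D a = vcomp D (sright D e) g'"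
    then have a: "a \<in> Sq D" "scod D a = N" "g \<in> VAr D" "g' \<in> VAr D" "vcod D g = hsrc D N" "vcod D g' = vdom D f"
      "sleft D a = g" "sright D a = vcomp D f g'" using e H by auto
    have M: "hsrc D (sdom D a) = vdom D g" "htgt D (sdom D a) = vdom D g'"
      using sleft_dom[OF a(1)] sright_dom[OF a(1)] a H by simp_all
    let ?b = "scomp D (shcomp D (scomp D q2 (sunit D g')) a) (linv (sdom D a))"
    show "\<exists>!b. b \<in> Sq D \<and> scod D b = sdom D e \<and> sleft D b = g \<and> sright D b = g' \<and> scomp D e b = a"
    proof (rule ex1I[where a = ?b])
      have b: "?b \<in> Sq D" "scod D ?b = sdom D e" "sleft D ?b = g" "sright D ?b = g'"
        using a H M e by simp_all
      have "scomp D e ?b = a"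
      proof -
        have IC: "scomp D (shcomp D q1 (sid D N)) (shcomp D (scomp D q2 (sunit D g')) a) = shcomp D (scomp D q1 (scomp D q2 (sunit D g'))) (scomp D (sid D N) a)"
          using a H M by (intro interchange[symmetric]) simp_all
        have "scomp D e ?b = scomp D (lunit D N) (scomp D (scomp D (shcomp D q1 (sid D N)) (shcomp D (scomp D q2 (sunit D g')) a)) (linv (sdom D a)))"
          unfolding e_def using a H M by simp
        also have "... = scomp D (lunit D N) (scomp D (shcomp D (scomp D q1 (scomp D q2 (sunit D g'))) (scomp D (sid D N) a)) (linv (sdom D a)))"
          unfolding IC ..
        also have "... = scomp D (lunit D N) (scomp D (shcomp D (sunit D (sright D a)) a) (linv (sdom D a)))"
          using a H M q12 by (simp add: sunit_vcomp flip: scomp_assoc)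
        also have "... = scomp D (scomp D a (lunit D (sdom D a))) (linv (sdom D a))"
          using lunit_nat[OF a(1)] a H M by (simp flip: scomp_assoc)
        also have "... = a" using a by simp
        finally show ?thesis .
      qed
      then show "?b \<in> Sq D \<and> scod D ?b = sdom D e \<and> sleft D ?b = g \<and> sright D ?b = g' \<and> scomp D e ?b = a"
        using b by simp
    next
      fix b assume B: "b \<in> Sq D \<and> scod D b = sdom D e \<and> sleft D b = g \<and> sright D b = g' \<and> scomp D e b = a"
      then have b: "b \<in> Sq D" "scod D b = hcomp D fc N" "sleft D b = g" "sright D b = g'" "scomp D e b = a"
        using e by auto
      have bd: "sdom D b = sdom D a" using b e by (metis scomp_dom)
      have "shcomp D (scomp D q2 (sunit D g')) a = scomp D (shcomp D q2 e) (shcomp D (sunit D g') b)"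
        unfolding b(5)[symmetric] using b e H a by (intro interchange) simp_all
      also have "... = scomp D b (lunit D (sdom D a))"
        unfolding KI using lunit_nat[OF b(1)] b bd e H a by simp
      finally have "shcomp D (scomp D q2 (sunit D g')) a = scomp D b (lunit D (sdom D a))" .
      then have "?b = scomp D (scomp D b (lunit D (sdom D a))) (linv (sdom D a))" by simp
      also have "... = b" using b bd a by simp
      finally show "b = ?b" by simp
    qed
  qed
  then show ?thesis using e by simp
qed

definition opcart :: "'s \<Rightarrow> bool" where
  "opcart e \<longleftrightarrow> e \<in> Sq D \<and> (\<forall>a g g'. a \<in> Sq D \<and> sdom D a = sdom D e \<and> g \<in> VAr D \<and> g' \<in> VAr D \<and>
      vdom D g = hsrc D (scod D e) \<and> vdom D g' = htgt D (scod D e) \<and>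
      sleft D a = vcomp D g (sleft D e) \<and> sright D a = vcomp D g' (sright D e) \<longrightarrow>
      (\<exists>!b. b \<in> Sq D \<and> sdom D b = scod D e \<and> sleft D b = g \<and> sright D b = g' \<and> scomp D b e = a))"

lemma ext_right:
  assumes C: "C \<in> HAr D" and f: "f \<in> VAr D" "vdom D f = htgt D C"
    and fh: "fh \<in> HAr D" "hsrc D fh = vdom D f" "htgt D fh = vcod D f"
    and p1: "p1 \<in> Sq D" "sdom D p1 = fh" "scod D p1 = hunit D (vcod D f)" "sleft D p1 = f" "sright D p1 = vid D (vcod D f)"
    and p2: "p2 \<in> Sq D" "sdom D p2 = hunit D (vdom D f)" "scod D p2 = fh" "sleft D p2 = vid D (vdom D f)" "sright D p2 = f"
    and p12: "scomp D p1 p2 = sunit D f"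
    and p1p2: "scomp D (lunit D fh) (shcomp D p1 p2) = runit D fh"
  defines "e \<equiv> scomp D (shcomp D p2 (sid D C)) (linv C)"
  shows "e \<in> Sq D \<and> sdom D e = C \<and> scod D e = hcomp D fh C \<and> sleft D e = vid D (hsrc D C) \<and> sright D e = f \<and> opcart e"
proof -
  note H = C f fh p1 p2
  have e: "e \<in> Sq D" "sdom D e = C" "scod D e = hcomp D fh C" "sleft D e = vid D (hsrc D C)" "sright D e = f"
    unfolding e_def using H by simp_all
  have NAT: "scomp D (assoc D (hunit D (vcod D f)) fh C) (shcomp D (shcomp D p1 p2) (sid D C)) =
     scomp D (shcomp D p1 (shcomp D p2 (sid D C))) (assoc D fh (hunit D (htgt D C)) C)"
    using assoc_nat[of "sid D C" p2 p1] H by simp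
  have TRI: "scomp D (shcomp D (sid D fh) (lunit D C)) (assoc D fh (hunit D (htgt D C)) C) = shcomp D (runit D fh) (sid D C)"
    using triangle[of C fh] H by simp
  have IC2: "scomp D (shcomp D (lunit D fh) (sid D C)) (shcomp D (shcomp D p1 p2) (sid D C)) = shcomp D (runit D fh) (sid D C)"
    using interchange[of "sid D C" "sid D C" "shcomp D p1 p2" "lunit D fh"] H p1p2 by simp
  have KL: "scomp D (lunit D (hcomp D fh C)) (assoc D (hunit D (vcod D f)) fh C) = shcomp D (lunit D fh) (sid D C)"
    using kelly_l[of fh C] H by simp
  have IC3: "shcomp D p1 e = scomp D (shcomp D p1 (shcomp D p2 (sid D C))) (shcomp D (sid D fh) (linv C))"
  proof -
    have "shcomp D p1 e = shcomp D (scomp D p1 (sid D fh)) e" using H by simp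
    also have "... = scomp D (shcomp D p1 (shcomp D p2 (sid D C))) (shcomp D (sid D fh) (linv C))"
      unfolding e_def using H by (intro interchange) simp_all
    finally show ?thesis .
  qed
  have IC4: "scomp D (shcomp D (sid D fh) (lunit D C)) (shcomp D (sid D fh) (linv C)) = sid D (hcomp D fh C)"
    using interchange[of "linv C" "lunit D C" "sid D fh" "sid D fh"] H by simp
  have KI: "scomp D (lunit D (hcomp D fh C)) (shcomp D p1 e) = sid D (hcomp D fh C)"
  proof -
    have "scomp D (lunit D (hcomp D fh C)) (shcomp D p1 e) =
        scomp D (lunit D (hcomp D fh C)) (scomp D (scomp D (shcomp D p1 (shcomp D p2 (sid D C))) (assoc D fh (hunit D (htgt D C)) C))
          (scomp D (ainv fh (hunit D (htgt D C)) C) (shcomp D (sid D fh) (linv C))))"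
      unfolding IC3 using H by simp
    also have "... = scomp D (lunit D (hcomp D fh C)) (scomp D (scomp D (assoc D (hunit D (vcod D f)) fh C) (shcomp D (shcomp D p1 p2) (sid D C)))
          (scomp D (ainv fh (hunit D (htgt D C)) C) (shcomp D (sid D fh) (linv C))))"
      unfolding NAT ..
    also have "... = scomp D (scomp D (scomp D (lunit D (hcomp D fh C)) (assoc D (hunit D (vcod D f)) fh C)) (shcomp D (shcomp D p1 p2) (sid D C)))
          (scomp D (ainv fh (hunit D (htgt D C)) C) (shcomp D (sid D fh) (linv C)))"
      using H by simp
    also have "... = scomp D (scomp D (shcomp D (lunit D fh) (sid D C)) (shcomp D (shcomp D p1 p2) (sid D C)))
          (scomp D (ainv fh (hunit D (htgt D C)) C) (shcomp D (sid D fh) (linv C)))"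
      unfolding KL ..
    also have "... = scomp D (shcomp D (runit D fh) (sid D C))
          (scomp D (ainv fh (hunit D (htgt D C)) C) (shcomp D (sid D fh) (linv C)))"
      unfolding IC2 ..
    also have "... = scomp D (scomp D (scomp D (shcomp D (sid D fh) (lunit D C)) (assoc D fh (hunit D (htgt D C)) C)) (ainv fh (hunit D (htgt D C)) C))
          (shcomp D (sid D fh) (linv C))"
      unfolding TRI using H by simp
    also have "... = scomp D (shcomp D (sid D fh) (lunit D C)) (shcomp D (sid D fh) (linv C))"
      using H by simp
    also have "... = sid D (hcomp D fh C)" by (rule IC4)
    finally show ?thesis .
  qed
  have "opcart e"
    unfolding opcart_def
  proof (intro conjI allI impI)
    show "e \<in> Sq D" by (rule e)
    fix a g g'
    assume A: "a \<in> Sq D \<and> sdom D a = sdom D e \<and> g \<in> VAr D \<and> g' \<in> VAr D \<and>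
      vdom D g = hsrc D (scod D e) \<and> vdom D g' = htgt D (scod D e) \<and>
      sleft D a = vcomp D g (sleft D e) \<and> sright D a = vcomp D g' (sright D e)"
    then have a: "a \<in> Sq D" "sdom D a = C" "g \<in> VAr D" "g' \<in> VAr D" "vdom D g = hsrc D C" "vdom D g' = vcod D f"
      "sleft D a = g" "sright D a = vcomp D g' f" using e H by auto
    have M: "hsrc D (scod D a) = vcod D g" "htgt D (scod D a) = vcod D g'"
      using sleft_cod[OF a(1)] sright_cod[OF a(1)] a H by simp_all
    let ?b = "scomp D (lunit D (scod D a)) (shcomp D (scomp D (sunit D g') p1) a)"
    show "\<exists>!b. b \<in> Sq D \<and> sdom D b = scod D e \<and> sleft D b = g \<and> sright D b = g' \<and> scomp D b e = a"
    proof (rule ex1I[where a = ?b])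
      have b: "?b \<in> Sq D" "sdom D ?b = scod D e" "sleft D ?b = g" "sright D ?b = g'"
        using a H M e by simp_all
      have "scomp D ?b e = a"
      proof -
        have IC: "scomp D (shcomp D (scomp D (sunit D g') p1) a) (shcomp D p2 (sid D C)) = shcomp D (scomp D (scomp D (sunit D g') p1) p2) (scomp D a (sid D C))"
          using a H M by (intro interchange[symmetric]) simp_all
        have "scomp D ?b e = scomp D (lunit D (scod D a)) (scomp D (scomp D (shcomp D (scomp D (sunit D g') p1) a) (shcomp D p2 (sid D C))) (linv C))"
          unfolding e_def using a H M by simp
        also have "... = scomp D (lunit D (scod D a)) (scomp D (shcomp D (scomp D (scomp D (sunit D g') p1) p2) (scomp D a (sid D C))) (linv C))"
          unfolding IC ..
        also have "... = scomp D (lunit D (scod D a)) (scomp D (shcomp D (sunit D (sright D a)) a) (linv (sdom D a)))"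
          using a H M p12 by (simp add: sunit_vcomp)
        also have "... = scomp D (scomp D a (lunit D (sdom D a))) (linv (sdom D a))"
          using lunit_nat[OF a(1)] a H M by (simp flip: scomp_assoc)
        also have "... = a" using a H by simp
        finally show ?thesis .
      qed
      then show "?b \<in> Sq D \<and> sdom D ?b = scod D e \<and> sleft D ?b = g \<and> sright D ?b = g' \<and> scomp D ?b e = a"
        using b by simp
    next
      fix b assume B: "b \<in> Sq D \<and> sdom D b = scod D e \<and> sleft D b = g \<and> sright D b = g' \<and> scomp D b e = a"
      then have b: "b \<in> Sq D" "sdom D b = hcomp D fh C" "sleft D b = g" "sright D b = g'" "scomp D b e = a"
        using e by auto
      have bd: "scod D b = scod D a" using b e by (metis scomp_cod)
      have "shcomp D (scomp D (sunit D g') p1) a = scomp D (shcomp D (sunit D g') b) (shcomp D p1 e)"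
        unfolding b(5)[symmetric] using b e H a by (intro interchange) simp_all
      then have "?b = scomp D (scomp D (lunit D (scod D b)) (shcomp D (sunit D (sright D b)) b)) (shcomp D p1 e)"
        using b bd e H a M by simp
      also have "... = scomp D b (scomp D (lunit D (hcomp D fh C)) (shcomp D p1 e))"
        unfolding lunit_nat[OF b(1)] using b e H by simp
      also have "... = b" unfolding KI using b by simp
      finally show "b = ?b" by simp
    qed
  qed
  then show ?thesis using e by simp
qed

lemma ext_left:
  assumes C: "C \<in> HAr D" and f: "f \<in> VAr D" "vdom D f = hsrc D C"
    and fc: "fc \<in> HAr D" "hsrc D fc = vcod D f" "htgt D fc = vdom D f"
    and q1: "q1 \<in> Sq D" "sdom D q1 = fc" "scod D q1 = hunit D (vcod D f)" "sleft D q1 = vid D (vcod D f)" "sright D q1 = f"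
    and q2: "q2 \<in> Sq D" "sdom D q2 = hunit D (vdom D f)" "scod D q2 = fc" "sleft D q2 = f" "sright D q2 = vid D (vdom D f)"
    and q12: "scomp D q1 q2 = sunit D f"
    and q2q1: "scomp D (runit D fc) (shcomp D q2 q1) = lunit D fc"
  defines "e \<equiv> scomp D (shcomp D (sid D C) q2) (rinv C)"
  shows "e \<in> Sq D \<and> sdom D e = C \<and> scod D e = hcomp D C fc \<and> sleft D e = f \<and> sright D e = vid D (htgt D C) \<and> opcart e"
proof -
  note H = C f fc q1 q2
  have e: "e \<in> Sq D" "sdom D e = C" "scod D e = hcomp D C fc" "sleft D e = f" "sright D e = vid D (htgt D C)"
    unfolding e_def using H by simp_all
  have NAT: "scomp D (assoc D C fc (hunit D (vcod D f))) (shcomp D (shcomp D (sid D C) q2) q1) =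
     scomp D (shcomp D (sid D C) (shcomp D q2 q1)) (assoc D C (hunit D (hsrc D C)) fc)"
    using assoc_nat[of q1 q2 "sid D C"] H by simp
  have KR: "runit D (hcomp D C fc) = scomp D (shcomp D (sid D C) (runit D fc)) (assoc D C fc (hunit D (vcod D f)))"
    using kelly_r[of C fc] H by simp
  have IC2: "scomp D (shcomp D (sid D C) (runit D fc)) (shcomp D (sid D C) (shcomp D q2 q1)) = shcomp D (sid D C) (lunit D fc)"
    using interchange[of "shcomp D q2 q1" "runit D fc" "sid D C" "sid D C"] H q2q1 by simp
  have TRI: "scomp D (shcomp D (sid D C) (lunit D fc)) (assoc D C (hunit D (hsrc D C)) fc) = shcomp D (runit D C) (sid D fc)"
    using triangle[of fc C] H by simp
  have IC3: "shcomp D e q1 = scomp D (shcomp D (shcomp D (sid D C) q2) q1) (shcomp D (rinv C) (sid D fc))"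
  proof -
    have "shcomp D e q1 = shcomp D e (scomp D q1 (sid D fc))" using H by simp
    also have "... = scomp D (shcomp D (shcomp D (sid D C) q2) q1) (shcomp D (rinv C) (sid D fc))"
      unfolding e_def using H by (intro interchange) simp_all
    finally show ?thesis .
  qed
  have IC4: "scomp D (shcomp D (runit D C) (sid D fc)) (shcomp D (rinv C) (sid D fc)) = sid D (hcomp D C fc)"
    using interchange[of "sid D fc" "sid D fc" "rinv C" "runit D C"] H by simp
  have KI: "scomp D (runit D (hcomp D C fc)) (shcomp D e q1) = sid D (hcomp D C fc)"
  proof -
    have "scomp D (runit D (hcomp D C fc)) (shcomp D e q1) =
        scomp D (scomp D (shcomp D (sid D C) (runit D fc)) (scomp D (assoc D C fc (hunit D (vcod D f))) (shcomp D (shcomp D (sid D C) q2) q1)))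
          (shcomp D (rinv C) (sid D fc))"
      unfolding IC3 KR using H by simp
    also have "... = scomp D (scomp D (shcomp D (sid D C) (runit D fc)) (scomp D (shcomp D (sid D C) (shcomp D q2 q1)) (assoc D C (hunit D (hsrc D C)) fc)))
          (shcomp D (rinv C) (sid D fc))"
      unfolding NAT ..
    also have "... = scomp D (scomp D (scomp D (shcomp D (sid D C) (runit D fc)) (shcomp D (sid D C) (shcomp D q2 q1))) (assoc D C (hunit D (hsrc D C)) fc))
          (shcomp D (rinv C) (sid D fc))"
      using H by simp
    also have "... = scomp D (scomp D (shcomp D (sid D C) (lunit D fc)) (assoc D C (hunit D (hsrc D C)) fc))
          (shcomp D (rinv C) (sid D fc))"
      unfolding IC2 ..
    also have "... = scomp D (shcomp D (runit D C) (sid D fc)) (shcomp D (rinv C) (sid D fc))"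
      unfolding TRI ..
    also have "... = sid D (hcomp D C fc)" by (rule IC4)
    finally show ?thesis .
  qed
  have "opcart e"
    unfolding opcart_def
  proof (intro conjI allI impI)
    show "e \<in> Sq D" by (rule e)
    fix a g g'
    assume A: "a \<in> Sq D \<and> sdom D a = sdom D e \<and> g \<in> VAr D \<and> g' \<in> VAr D \<and>
      vdom D g = hsrc D (scod D e) \<and> vdom D g' = htgt D (scod D e) \<and>
      sleft D a = vcomp D g (sleft D e) \<and> sright D a = vcomp D g' (sright D e)"
    then have a: "a \<in> Sq D" "sdom D a = C" "g \<in> VAr D" "g' \<in> VAr D" "vdom D g = vcod D f" "vdom D g' = htgt D C"
      "sleft D a = vcomp D g f" "sright D a = g'" using e H by auto
    have M: "hsrc D (scod D a) = vcod D g" "htgt D (scod D a) = vcod D g'"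
      using sleft_cod[OF a(1)] sright_cod[OF a(1)] a H by simp_all
    let ?b = "scomp D (runit D (scod D a)) (shcomp D a (scomp D (sunit D g) q1))"
    show "\<exists>!b. b \<in> Sq D \<and> sdom D b = scod D e \<and> sleft D b = g \<and> sright D b = g' \<and> scomp D b e = a"
    proof (rule ex1I[where a = ?b])
      have b: "?b \<in> Sq D" "sdom D ?b = scod D e" "sleft D ?b = g" "sright D ?b = g'"
        using a H M e by simp_all
      have "scomp D ?b e = a"
      proof -
        have IC: "scomp D (shcomp D a (scomp D (sunit D g) q1)) (shcomp D (sid D C) q2) = shcomp D (scomp D a (sid D C)) (scomp D (scomp D (sunit D g) q1) q2)"
          using a H M by (intro interchange[symmetric]) simp_all
        have "scomp D ?b e = scomp D (runit D (scod D a)) (scomp D (scomp D (shcomp D a (scomp D (sunit D g) q1)) (shcomp D (sid D C) q2)) (rinv C))"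
          unfolding e_def using a H M by simp
        also have "... = scomp D (runit D (scod D a)) (scomp D (shcomp D (scomp D a (sid D C)) (scomp D (scomp D (sunit D g) q1) q2)) (rinv C))"
          unfolding IC ..
        also have "... = scomp D (runit D (scod D a)) (scomp D (shcomp D a (sunit D (sleft D a))) (rinv (sdom D a)))"
          using a H M q12 by (simp add: sunit_vcomp)
        also have "... = scomp D (scomp D a (runit D (sdom D a))) (rinv (sdom D a))"
          using runit_nat[OF a(1)] a H M by (simp flip: scomp_assoc)
        also have "... = a" using a H by simp
        finally show ?thesis .
      qed
      then show "?b \<in> Sq D \<and> sdom D ?b = scod D e \<and> sleft D ?b = g \<and> sright D ?b = g' \<and> scomp D ?b e = a"
        using b by simp
    next
      fix b assume B: "b \<in> Sq D \<and> sdom D b = scod D e \<and> sleft D b = g \<and> sright D b = g' \<and> scomp D b e = a"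
      then have b: "b \<in> Sq D" "sdom D b = hcomp D C fc" "sleft D b = g" "sright D b = g'" "scomp D b e = a"
        using e by auto
      have bd: "scod D b = scod D a" using b e by (metis scomp_cod)
      have "shcomp D a (scomp D (sunit D g) q1) = scomp D (shcomp D b (sunit D g)) (shcomp D e q1)"
        unfolding b(5)[symmetric] using b e H a by (intro interchange) simp_all
      then have "?b = scomp D (scomp D (runit D (scod D b)) (shcomp D b (sunit D (sleft D b)))) (shcomp D e q1)"
        using b bd e H a M by simp
      also have "... = scomp D b (scomp D (runit D (hcomp D C fc)) (shcomp D e q1))"
        unfolding runit_nat[OF b(1)] using b e H by simp
      also have "... = b" unfolding KI using b by simp
      finally show "b = ?b" by simp
    qed
  qed
  then show ?thesis using e by simp
qed

lemma cartD:
  assumes "cart e" "a \<in> Sq D" "scod D a = scod D e" "g \<in> VAr D" "g' \<in> VAr D"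
      "vcod D g = hsrc D (sdom D e)" "vcod D g' = htgt D (sdom D e)"
      "sleft D a = vcomp D (sleft D e) g" "sright D a = vcomp D (sright D e) g'"
  obtains b where "b \<in> Sq D" "scod D b = sdom D e" "sleft D b = g" "sright D b = g'" "scomp D e b = a"
    "\<And>b'. b' \<in> Sq D \<Longrightarrow> scod D b' = sdom D e \<Longrightarrow> sleft D b' = g \<Longrightarrow> sright D b' = g' \<Longrightarrow> scomp D e b' = a \<Longrightarrow> b' = b"
proof -
  have "\<exists>!b. b \<in> Sq D \<and> scod D b = sdom D e \<and> sleft D b = g \<and> sright D b = g' \<and> scomp D e b = a"
    using assms unfolding cart_def by blast
  then show ?thesis using that by (metis (no_types, lifting))
qed

lemma opcartD:
  assumes "opcart e" "a \<in> Sq D" "sdom D a = sdom D e" "g \<in> VAr D" "g' \<in> VAr D"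
      "vdom D g = hsrc D (scod D e)" "vdom D g' = htgt D (scod D e)"
      "sleft D a = vcomp D g (sleft D e)" "sright D a = vcomp D g' (sright D e)"
  obtains b where "b \<in> Sq D" "sdom D b = scod D e" "sleft D b = g" "sright D b = g'" "scomp D b e = a"
    "\<And>b'. b' \<in> Sq D \<Longrightarrow> sdom D b' = scod D e \<Longrightarrow> sleft D b' = g \<Longrightarrow> sright D b' = g' \<Longrightarrow> scomp D b' e = a \<Longrightarrow> b' = b"
proof -
  have "\<exists>!b. b \<in> Sq D \<and> sdom D b = scod D e \<and> sleft D b = g \<and> sright D b = g' \<and> scomp D b e = a"
    using assms unfolding opcart_def by blast
  then show ?thesis using that by (metis (no_types, lifting))
qed

lemma cart_comp:
  assumes c0: "cart e0" and c1: "cart e1" and e: "scod D e1 = sdom D e0"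
  shows "cart (scomp D e0 e1)"
proof -
  have e0: "e0 \<in> Sq D" and e1: "e1 \<in> Sq D" using c0 c1 unfolding cart_def by auto
  show ?thesis unfolding cart_def
  proof (intro conjI allI impI)
    show "scomp D e0 e1 \<in> Sq D" using e0 e1 e by simp
    fix a g g'
    assume A: "a \<in> Sq D \<and> scod D a = scod D (scomp D e0 e1) \<and> g \<in> VAr D \<and> g' \<in> VAr D \<and>
      vcod D g = hsrc D (sdom D (scomp D e0 e1)) \<and> vcod D g' = htgt D (sdom D (scomp D e0 e1)) \<and>
      sleft D a = vcomp D (sleft D (scomp D e0 e1)) g \<and> sright D a = vcomp D (sright D (scomp D e0 e1)) g'"
    then have a: "a \<in> Sq D" "scod D a = scod D e0" "g \<in> VAr D" "g' \<in> VAr D" "vcod D g = hsrc D (sdom D e1)"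
       "vcod D g' = htgt D (sdom D e1)" "sleft D a = vcomp D (sleft D e0) (vcomp D (sleft D e1) g)"
       "sright D a = vcomp D (sright D e0) (vcomp D (sright D e1) g')"
      using e0 e1 e by auto
    obtain b0 where b0: "b0 \<in> Sq D" "scod D b0 = sdom D e0" "sleft D b0 = vcomp D (sleft D e1) g"
        "sright D b0 = vcomp D (sright D e1) g'" "scomp D e0 b0 = a"
      and u0: "\<And>b'. b' \<in> Sq D \<Longrightarrow> scod D b' = sdom D e0 \<Longrightarrow> sleft D b' = vcomp D (sleft D e1) g \<Longrightarrow>
          sright D b' = vcomp D (sright D e1) g' \<Longrightarrow> scomp D e0 b' = a \<Longrightarrow> b' = b0"
    proof -
      have "scod D a = scod D e0" "vcomp D (sleft D e1) g \<in> VAr D" "vcomp D (sright D e1) g' \<in> VAr D"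
          "vcod D (vcomp D (sleft D e1) g) = hsrc D (sdom D e0)" "vcod D (vcomp D (sright D e1) g') = htgt D (sdom D e0)"
        using a e0 e1 e by simp_all
      then show ?thesis using that by (rule cartD[OF c0 a(1) _ _ _ _ _ a(7,8)])
    qed
    obtain b where b: "b \<in> Sq D" "scod D b = sdom D e1" "sleft D b = g" "sright D b = g'" "scomp D e1 b = b0"
      and u1: "\<And>b'. b' \<in> Sq D \<Longrightarrow> scod D b' = sdom D e1 \<Longrightarrow> sleft D b' = g \<Longrightarrow>
          sright D b' = g' \<Longrightarrow> scomp D e1 b' = b0 \<Longrightarrow> b' = b"
    proof -
      have "scod D b0 = scod D e1" "vcod D g = hsrc D (sdom D e1)" "vcod D g' = htgt D (sdom D e1)"
          "sleft D b0 = vcomp D (sleft D e1) g" "sright D b0 = vcomp D (sright D e1) g'"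
        using a e0 e1 e b0 by simp_all
      then show ?thesis using that by (rule cartD[OF c1 b0(1) _ a(3,4)])
    qed
    show "\<exists>!b. b \<in> Sq D \<and> scod D b = sdom D (scomp D e0 e1) \<and> sleft D b = g \<and> sright D b = g' \<and> scomp D (scomp D e0 e1) b = a"
    proof (rule ex1I[where a = b])
      show "b \<in> Sq D \<and> scod D b = sdom D (scomp D e0 e1) \<and> sleft D b = g \<and> sright D b = g' \<and> scomp D (scomp D e0 e1) b = a"
        using b b0 e0 e1 e by simp
    next
      fix b' assume B: "b' \<in> Sq D \<and> scod D b' = sdom D (scomp D e0 e1) \<and> sleft D b' = g \<and> sright D b' = g' \<and> scomp D (scomp D e0 e1) b' = a"
      have "scomp D (scomp D e0 e1) b' = scomp D e0 (scomp D e1 b')"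
        using B e0 e1 e by (intro scomp_assoc) auto
      then have "scomp D e0 (scomp D e1 b') = a" using B by simp
      then have "scomp D e1 b' = b0" using B e0 e1 e a by (intro u0) simp_all
      then show "b' = b" using B e0 e1 e by (intro u1) simp_all
    qed
  qed
qed

lemma opcart_comp:
  assumes c0: "opcart e0" and c1: "opcart e1" and e: "scod D e0 = sdom D e1"
  shows "opcart (scomp D e1 e0)"
proof -
  have e0: "e0 \<in> Sq D" and e1: "e1 \<in> Sq D" using c0 c1 unfolding opcart_def by auto
  show ?thesis unfolding opcart_def
  proof (intro conjI allI impI)
    show "scomp D e1 e0 \<in> Sq D" using e0 e1 e by simp
    fix a g g'
    assume A: "a \<in> Sq D \<and> sdom D a = sdom D (scomp D e1 e0) \<and> g \<in> VAr D \<and> g' \<in> VAr D \<and>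
      vdom D g = hsrc D (scod D (scomp D e1 e0)) \<and> vdom D g' = htgt D (scod D (scomp D e1 e0)) \<and>
      sleft D a = vcomp D g (sleft D (scomp D e1 e0)) \<and> sright D a = vcomp D g' (sright D (scomp D e1 e0))"
    then have a: "a \<in> Sq D" "sdom D a = sdom D e0" "g \<in> VAr D" "g' \<in> VAr D" "vdom D g = hsrc D (scod D e1)"
       "vdom D g' = htgt D (scod D e1)" "sleft D a = vcomp D (vcomp D g (sleft D e1)) (sleft D e0)"
       "sright D a = vcomp D (vcomp D g' (sright D e1)) (sright D e0)"
      using e0 e1 e by auto
    obtain b0 where b0: "b0 \<in> Sq D" "sdom D b0 = scod D e0" "sleft D b0 = vcomp D g (sleft D e1)"
        "sright D b0 = vcomp D g' (sright D e1)" "scomp D b0 e0 = a"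
      and u0: "\<And>b'. b' \<in> Sq D \<Longrightarrow> sdom D b' = scod D e0 \<Longrightarrow> sleft D b' = vcomp D g (sleft D e1) \<Longrightarrow>
          sright D b' = vcomp D g' (sright D e1) \<Longrightarrow> scomp D b' e0 = a \<Longrightarrow> b' = b0"
    proof -
      have "sdom D a = sdom D e0" "vcomp D g (sleft D e1) \<in> VAr D" "vcomp D g' (sright D e1) \<in> VAr D"
          "vdom D (vcomp D g (sleft D e1)) = hsrc D (scod D e0)" "vdom D (vcomp D g' (sright D e1)) = htgt D (scod D e0)"
        using a e0 e1 e by simp_all
      then show ?thesis using that by (rule opcartD[OF c0 a(1) _ _ _ _ _ a(7,8)])
    qed
    obtain b where b: "b \<in> Sq D" "sdom D b = scod D e1" "sleft D b = g" "sright D b = g'" "scomp D b e1 = b0"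
      and u1: "\<And>b'. b' \<in> Sq D \<Longrightarrow> sdom D b' = scod D e1 \<Longrightarrow> sleft D b' = g \<Longrightarrow>
          sright D b' = g' \<Longrightarrow> scomp D b' e1 = b0 \<Longrightarrow> b' = b"
    proof -
      have "sdom D b0 = sdom D e1" "vdom D g = hsrc D (scod D e1)" "vdom D g' = htgt D (scod D e1)"
          "sleft D b0 = vcomp D g (sleft D e1)" "sright D b0 = vcomp D g' (sright D e1)"
        using a e0 e1 e b0 by simp_all
      then show ?thesis using that by (rule opcartD[OF c1 b0(1) _ a(3,4)])
    qed
    show "\<exists>!b. b \<in> Sq D \<and> sdom D b = scod D (scomp D e1 e0) \<and> sleft D b = g \<and> sright D b = g' \<and> scomp D b (scomp D e1 e0) = a"
    proof (rule ex1I[where a = b])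
      show "b \<in> Sq D \<and> sdom D b = scod D (scomp D e1 e0) \<and> sleft D b = g \<and> sright D b = g' \<and> scomp D b (scomp D e1 e0) = a"
        using b b0 e0 e1 e by (simp flip: scomp_assoc)
    next
      fix b' assume B: "b' \<in> Sq D \<and> sdom D b' = scod D (scomp D e1 e0) \<and> sleft D b' = g \<and> sright D b' = g' \<and> scomp D b' (scomp D e1 e0) = a"
      then have "scomp D (scomp D b' e1) e0 = a" using e0 e1 e by simp
      then have "scomp D b' e1 = b0" using B e0 e1 e a by (intro u0) simp_all
      then show "b' = b" using B e0 e1 e by (intro u1) simp_all
    qed
  qed
qed

lemma restr:
  assumes fib: "\<forall>f\<in>VAr D. has_companion D f \<and> has_conjoint D f"
    and f: "f \<in> VAr D" and N: "N \<in> HAr D" "hsrc D N = vcod D f" "htgt D N = vcod D f"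
  shows "\<exists>R e. R \<in> HAr D \<and> hsrc D R = vdom D f \<and> htgt D R = vdom D f \<and> e \<in> Sq D \<and> sdom D e = R \<and>
     scod D e = N \<and> sleft D e = f \<and> sright D e = f \<and> cart e"
proof -
  obtain fh p1 p2 where fh: "fh \<in> HAr D" "p1 \<in> Sq D" "p2 \<in> Sq D"
     "hsrc D fh = vdom D f" "htgt D fh = vcod D f"
     "sdom D p1 = fh" "scod D p1 = hunit D (vcod D f)" "sleft D p1 = f" "sright D p1 = vid D (vcod D f)"
     "sdom D p2 = hunit D (vdom D f)" "scod D p2 = fh" "sleft D p2 = vid D (vdom D f)" "sright D p2 = f"
     "scomp D p1 p2 = sunit D f" "scomp D (lunit D fh) (shcomp D p1 p2) = runit D fh"
    using fib f unfolding has_companion_def by blast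
  obtain fc q1 q2 where fc: "fc \<in> HAr D" "q1 \<in> Sq D" "q2 \<in> Sq D"
     "hsrc D fc = vcod D f" "htgt D fc = vdom D f"
     "sdom D q1 = fc" "scod D q1 = hunit D (vcod D f)" "sleft D q1 = vid D (vcod D f)" "sright D q1 = f"
     "sdom D q2 = hunit D (vdom D f)" "scod D q2 = fc" "sleft D q2 = f" "sright D q2 = vid D (vdom D f)"
     "scomp D q1 q2 = sunit D f" "scomp D (runit D fc) (shcomp D q2 q1) = lunit D fc"
    using fib f unfolding has_conjoint_def by blast
  define e1 where "e1 = scomp D (runit D N) (shcomp D (sid D N) p1)"
  have E1: "e1 \<in> Sq D \<and> sdom D e1 = hcomp D N fh \<and> scod D e1 = N \<and> sleft D e1 = f \<and> sright D e1 = vid D (htgt D N) \<and> cart e1"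
    unfolding e1_def using N f fh by (intro restr_left) auto
  let ?N1 = "hcomp D N fh"
  have N1: "?N1 \<in> HAr D" "hsrc D ?N1 = vdom D f" "htgt D ?N1 = vcod D f" using N f fh by simp_all
  define e2 where "e2 = scomp D (lunit D ?N1) (shcomp D q1 (sid D ?N1))"
  have E2: "e2 \<in> Sq D \<and> sdom D e2 = hcomp D fc ?N1 \<and> scod D e2 = ?N1 \<and> sleft D e2 = vid D (hsrc D ?N1) \<and> sright D e2 = f \<and> cart e2"
    unfolding e2_def using N1 f fc by (intro restr_right) auto
  have "cart (scomp D e1 e2)" using E1 E2 by (intro cart_comp) auto
  moreover have "scomp D e1 e2 \<in> Sq D" "sdom D (scomp D e1 e2) = hcomp D fc ?N1" "scod D (scomp D e1 e2) = N"
     "sleft D (scomp D e1 e2) = f" "sright D (scomp D e1 e2) = f"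
    using E1 E2 N1 N f by simp_all
  moreover have "hcomp D fc ?N1 \<in> HAr D" "hsrc D (hcomp D fc ?N1) = vdom D f" "htgt D (hcomp D fc ?N1) = vdom D f"
    using N1 fc f by simp_all
  ultimately show ?thesis by blast
qed

lemma ext:
  assumes fib: "\<forall>f\<in>VAr D. has_companion D f \<and> has_conjoint D f"
    and f: "f \<in> VAr D" and C: "C \<in> HAr D" "hsrc D C = vdom D f" "htgt D C = vdom D f"
  shows "\<exists>R e. R \<in> HAr D \<and> hsrc D R = vcod D f \<and> htgt D R = vcod D f \<and> e \<in> Sq D \<and> sdom D e = C \<and>
     scod D e = R \<and> sleft D e = f \<and> sright D e = f \<and> opcart e"
proof -
  obtain fh p1 p2 where fh: "fh \<in> HAr D" "p1 \<in> Sq D" "p2 \<in> Sq D"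
     "hsrc D fh = vdom D f" "htgt D fh = vcod D f"
     "sdom D p1 = fh" "scod D p1 = hunit D (vcod D f)" "sleft D p1 = f" "sright D p1 = vid D (vcod D f)"
     "sdom D p2 = hunit D (vdom D f)" "scod D p2 = fh" "sleft D p2 = vid D (vdom D f)" "sright D p2 = f"
     "scomp D p1 p2 = sunit D f" "scomp D (lunit D fh) (shcomp D p1 p2) = runit D fh"
    using fib f unfolding has_companion_def by blast
  obtain fc q1 q2 where fc: "fc \<in> HAr D" "q1 \<in> Sq D" "q2 \<in> Sq D"
     "hsrc D fc = vcod D f" "htgt D fc = vdom D f"
     "sdom D q1 = fc" "scod D q1 = hunit D (vcod D f)" "sleft D q1 = vid D (vcod D f)" "sright D q1 = f"
     "sdom D q2 = hunit D (vdom D f)" "scod D q2 = fc" "sleft D q2 = f" "sright D q2 = vid D (vdom D f)"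
     "scomp D q1 q2 = sunit D f" "scomp D (runit D fc) (shcomp D q2 q1) = lunit D fc"
    using fib f unfolding has_conjoint_def by blast
  define e1 where "e1 = scomp D (shcomp D p2 (sid D C)) (linv C)"
  have E1: "e1 \<in> Sq D \<and> sdom D e1 = C \<and> scod D e1 = hcomp D fh C \<and> sleft D e1 = vid D (hsrc D C) \<and> sright D e1 = f \<and> opcart e1"
    unfolding e1_def using C f fh by (intro ext_right) auto
  let ?C1 = "hcomp D fh C"
  have C1: "?C1 \<in> HAr D" "hsrc D ?C1 = vdom D f" "htgt D ?C1 = vcod D f" using C f fh by simp_all
  define e2 where "e2 = scomp D (shcomp D (sid D ?C1) q2) (rinv ?C1)"
  have E2: "e2 \<in> Sq D \<and> sdom D e2 = ?C1 \<and> scod D e2 = hcomp D ?C1 fc \<and> sleft D e2 = f \<and> sright D e2 = vid D (htgt D ?C1) \<and> opcart e2"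
    unfolding e2_def using C1 f fc by (intro ext_left) auto
  have "opcart (scomp D e2 e1)" using E1 E2 by (intro opcart_comp) auto
  moreover have "scomp D e2 e1 \<in> Sq D" "sdom D (scomp D e2 e1) = C" "scod D (scomp D e2 e1) = hcomp D ?C1 fc"
     "sleft D (scomp D e2 e1) = f" "sright D (scomp D e2 e1) = f"
    using E1 E2 C1 C f by simp_all
  moreover have "hcomp D ?C1 fc \<in> HAr D" "hsrc D (hcomp D ?C1 fc) = vcod D f" "htgt D (hcomp D ?C1 fc) = vcod D f"
    using C1 fc f by simp_all
  ultimately show ?thesis by blast
qed

lemma cart_uniq:
  assumes c: "cart e" and b: "b1 \<in> Sq D" "b2 \<in> Sq D" "scod D b1 = sdom D e" "scod D b2 = sdom D e"
    "sleft D b1 = sleft D b2" "sright D b1 = sright D b2" "scomp D e b1 = scomp D e b2"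
  shows "b1 = b2"
proof -
  have e: "e \<in> Sq D" using c unfolding cart_def by auto
  have "scomp D e b1 \<in> Sq D" "scod D (scomp D e b1) = scod D e" "sleft D b1 \<in> VAr D" "sright D b1 \<in> VAr D"
    "vcod D (sleft D b1) = hsrc D (sdom D e)" "vcod D (sright D b1) = htgt D (sdom D e)"
    "sleft D (scomp D e b1) = vcomp D (sleft D e) (sleft D b1)" "sright D (scomp D e b1) = vcomp D (sright D e) (sright D b1)"
    using b e by simp_all
  then have "\<exists>!b. b \<in> Sq D \<and> scod D b = sdom D e \<and> sleft D b = sleft D b1 \<and> sright D b = sright D b1 \<and> scomp D e b = scomp D e b1"
    using c b unfolding cart_def by blast
  then show ?thesis using b by (metis (no_types, lifting))
qed

lemma opcart_uniq:
  assumes c: "opcart e" and b: "b1 \<in> Sq D" "b2 \<in> Sq D" "sdom D b1 = scod D e" "sdom D b2 = scod D e"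
    "sleft D b1 = sleft D b2" "sright D b1 = sright D b2" "scomp D b1 e = scomp D b2 e"
  shows "b1 = b2"
proof -
  have e: "e \<in> Sq D" using c unfolding opcart_def by auto
  have "scomp D b1 e \<in> Sq D" "sdom D (scomp D b1 e) = sdom D e" "sleft D b1 \<in> VAr D" "sright D b1 \<in> VAr D"
    "vdom D (sleft D b1) = hsrc D (scod D e)" "vdom D (sright D b1) = htgt D (scod D e)"
    "sleft D (scomp D b1 e) = vcomp D (sleft D b1) (sleft D e)" "sright D (scomp D b1 e) = vcomp D (sright D b1) (sright D e)"
    using b e by simp_all
  then have "\<exists>!b. b \<in> Sq D \<and> sdom D b = scod D e \<and> sleft D b = sleft D b1 \<and> sright D b = sright D b1 \<and> scomp D b e = scomp D b1 e"
    using c b unfolding opcart_def by blast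
  then show ?thesis using b by (metis (no_types, lifting))
qed

lemma cartE:
  assumes "cart e" "a \<in> Sq D" "scod D a = scod D e" "g \<in> VAr D" "g' \<in> VAr D"
      "vcod D g = hsrc D (sdom D e)" "vcod D g' = htgt D (sdom D e)"
      "sleft D a = vcomp D (sleft D e) g" "sright D a = vcomp D (sright D e) g'"
  shows "\<exists>b. b \<in> Sq D \<and> scod D b = sdom D e \<and> sleft D b = g \<and> sright D b = g' \<and> scomp D e b = a"
  using assms unfolding cart_def by blast

lemma opcartE:
  assumes "opcart e" "a \<in> Sq D" "sdom D a = sdom D e" "g \<in> VAr D" "g' \<in> VAr D"
      "vdom D g = hsrc D (scod D e)" "vdom D g' = htgt D (scod D e)"
      "sleft D a = vcomp D g (sleft D e)" "sright D a = vcomp D g' (sright D e)"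
  shows "\<exists>b. b \<in> Sq D \<and> sdom D b = scod D e \<and> sleft D b = g \<and> sright D b = g' \<and> scomp D b e = a"
  using assms unfolding opcart_def by blast

lemma mnd_lift:
  assumes fib: "\<forall>f\<in>VAr D. has_companion D f \<and> has_conjoint D f"
    and Y: "is_monad D (B, N, n, \<epsilon>)" and f: "f \<in> VAr D" "vcod D f = B"
  shows "\<exists>x e. is_monad D x \<and> monad_mor D x (B, N, n, \<epsilon>) e \<and> fst x = vdom D f \<and> sleft D e = f \<and>
      cartesian (is_monad D) (monad_mor D) (scomp D) fst (sleft D) (vhom D) (vcomp D) x (B, N, n, \<epsilon>) e"
proof -
  have Yd: "B \<in> Ob D" "N \<in> HAr D" "hsrc D N = B" "htgt D N = B"
     "n \<in> Sq D" "sdom D n = hcomp D N N" "scod D n = N" "sleft D n = vid D B" "sright D n = vid D B"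
     "\<epsilon> \<in> Sq D" "sdom D \<epsilon> = hunit D B" "scod D \<epsilon> = N" "sleft D \<epsilon> = vid D B" "sright D \<epsilon> = vid D B"
    using Y unfolding is_monad_def globular_def by auto
  have YA: "scomp D n (shcomp D n (sid D N)) = scomp D n (scomp D (shcomp D (sid D N) n) (assoc D N N N))"
   and YL: "scomp D n (shcomp D \<epsilon> (sid D N)) = lunit D N"
   and YR: "scomp D n (shcomp D (sid D N) \<epsilon>) = runit D N"
    using Y unfolding is_monad_def by auto
  obtain R e where Re: "R \<in> HAr D" "hsrc D R = vdom D f" "htgt D R = vdom D f" "e \<in> Sq D" "sdom D e = R"
     "scod D e = N" "sleft D e = f" "sright D e = f" and ce: "cart e"
    using restr[OF fib f(1) Yd(2)] Yd f by auto
  let ?A = "vdom D f"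
  note H = Yd Re f
  have "\<exists>b. b \<in> Sq D \<and> scod D b = sdom D e \<and> sleft D b = vid D ?A \<and> sright D b = vid D ?A \<and> scomp D e b = scomp D n (shcomp D e e)"
    by (rule cartE[OF ce]) (use H in simp_all)
  then obtain mR where mR: "mR \<in> Sq D" "scod D mR = R" "sleft D mR = vid D ?A" "sright D mR = vid D ?A"
     and emR: "scomp D e mR = scomp D n (shcomp D e e)" using Re by auto
  have mRd: "sdom D mR = hcomp D R R" using scomp_dom[of mR e] emR mR H by simp
  have "\<exists>b. b \<in> Sq D \<and> scod D b = sdom D e \<and> sleft D b = vid D ?A \<and> sright D b = vid D ?A \<and> scomp D e b = scomp D \<epsilon> (sunit D f)"
    by (rule cartE[OF ce]) (use H in simp_all)
  then obtain eR where eR: "eR \<in> Sq D" "scod D eR = R" "sleft D eR = vid D ?A" "sright D eR = vid D ?A"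
     and eeR: "scomp D e eR = scomp D \<epsilon> (sunit D f)" using Re by auto
  have eRd: "sdom D eR = hunit D ?A" using scomp_dom[of eR e] eeR eR H by simp
  note H2 = H mR mRd eR eRd
  have emR2: "scomp D e (scomp D mR x) = scomp D n (scomp D (shcomp D e e) x)" if "x \<in> Sq D" "scod D x = hcomp D R R" for x
  proof -
    have "scomp D e (scomp D mR x) = scomp D (scomp D e mR) x" using that H2 by simp
    then show ?thesis unfolding emR using that H2 by simp
  qed
  have eeR2: "scomp D e (scomp D eR x) = scomp D \<epsilon> (scomp D (sunit D f) x)" if "x \<in> Sq D" "scod D x = hunit D ?A" for x
  proof -
    have "scomp D e (scomp D eR x) = scomp D (scomp D e eR) x" using that H2 by simp
    then show ?thesis unfolding eeR using that H2 by simp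
  qed
  have MA: "scomp D mR (shcomp D mR (sid D R)) = scomp D mR (scomp D (shcomp D (sid D R) mR) (assoc D R R R))"
  proof (rule cart_uniq[OF ce])
    have IC1: "scomp D (shcomp D e e) (shcomp D mR (sid D R)) = shcomp D (scomp D e mR) (scomp D e (sid D R))"
      using H2 by (intro interchange[symmetric]) simp_all
    have IC2: "shcomp D (scomp D n (shcomp D e e)) (scomp D (sid D N) e) = scomp D (shcomp D n (sid D N)) (shcomp D (shcomp D e e) e)"
      using H2 by (intro interchange) simp_all
    have NAT: "scomp D (assoc D N N N) (shcomp D (shcomp D e e) e) = scomp D (shcomp D e (shcomp D e e)) (assoc D R R R)"
      using assoc_nat[of e e e] H2 by simp
    have IC3: "scomp D (shcomp D (sid D N) n) (shcomp D e (shcomp D e e)) = shcomp D (scomp D (sid D N) e) (scomp D n (shcomp D e e))"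
      using H2 by (intro interchange[symmetric]) simp_all
    have IC4: "shcomp D (scomp D e (sid D R)) (scomp D e mR) = scomp D (shcomp D e e) (shcomp D (sid D R) mR)"
      using H2 by (intro interchange) simp_all
    have "scomp D e (scomp D mR (shcomp D mR (sid D R))) = scomp D n (scomp D (shcomp D e e) (shcomp D mR (sid D R)))"
      using H2 by (simp add: emR2)
    also have "... = scomp D n (shcomp D (scomp D e mR) (scomp D e (sid D R)))" unfolding IC1 ..
    also have "... = scomp D n (shcomp D (scomp D n (shcomp D e e)) (scomp D (sid D N) e))" unfolding emR using H2 by simp
    also have "... = scomp D n (scomp D (shcomp D n (sid D N)) (shcomp D (shcomp D e e) e))" unfolding IC2 ..
    also have "... = scomp D (scomp D n (shcomp D n (sid D N))) (shcomp D (shcomp D e e) e)" using H2 by simp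
    also have "... = scomp D (scomp D n (scomp D (shcomp D (sid D N) n) (assoc D N N N))) (shcomp D (shcomp D e e) e)" unfolding YA ..
    also have "... = scomp D n (scomp D (shcomp D (sid D N) n) (scomp D (assoc D N N N) (shcomp D (shcomp D e e) e)))" using H2 by simp
    also have "... = scomp D n (scomp D (shcomp D (sid D N) n) (scomp D (shcomp D e (shcomp D e e)) (assoc D R R R)))" unfolding NAT ..
    also have "... = scomp D n (scomp D (scomp D (shcomp D (sid D N) n) (shcomp D e (shcomp D e e))) (assoc D R R R))" using H2 by simp
    also have "... = scomp D n (scomp D (shcomp D (scomp D (sid D N) e) (scomp D n (shcomp D e e))) (assoc D R R R))" unfolding IC3 ..
    also have "... = scomp D n (scomp D (shcomp D (scomp D e (sid D R)) (scomp D e mR)) (assoc D R R R))" unfolding emR using H2 by simp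
    also have "... = scomp D n (scomp D (scomp D (shcomp D e e) (shcomp D (sid D R) mR)) (assoc D R R R))" unfolding IC4 ..
    also have "... = scomp D e (scomp D mR (scomp D (shcomp D (sid D R) mR) (assoc D R R R)))" using H2 by (simp add: emR2)
    finally show "scomp D e (scomp D mR (shcomp D mR (sid D R))) = scomp D e (scomp D mR (scomp D (shcomp D (sid D R) mR) (assoc D R R R)))" .
  qed (use H2 in simp_all)
  have LawL: "scomp D mR (shcomp D eR (sid D R)) = lunit D R"
  proof (rule cart_uniq[OF ce])
    have IC5: "scomp D (shcomp D e e) (shcomp D eR (sid D R)) = shcomp D (scomp D e eR) (scomp D e (sid D R))"
      using H2 by (intro interchange[symmetric]) simp_all
    have IC6: "shcomp D (scomp D \<epsilon> (sunit D f)) (scomp D (sid D N) e) = scomp D (shcomp D \<epsilon> (sid D N)) (shcomp D (sunit D f) e)"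
      using H2 by (intro interchange) simp_all
    have "scomp D e (scomp D mR (shcomp D eR (sid D R))) = scomp D n (scomp D (shcomp D e e) (shcomp D eR (sid D R)))"
      using H2 by (simp add: emR2)
    also have "... = scomp D n (shcomp D (scomp D e eR) (scomp D e (sid D R)))" unfolding IC5 ..
    also have "... = scomp D n (shcomp D (scomp D \<epsilon> (sunit D f)) (scomp D (sid D N) e))" unfolding eeR using H2 by simp
    also have "... = scomp D (scomp D n (shcomp D \<epsilon> (sid D N))) (shcomp D (sunit D f) e)" unfolding IC6 using H2 by simp
    also have "... = scomp D (lunit D (scod D e)) (shcomp D (sunit D (sright D e)) e)" unfolding YL using H2 by simp
    also have "... = scomp D e (lunit D R)" unfolding lunit_nat[OF Re(4)] using H2 by simp
    finally show "scomp D e (scomp D mR (shcomp D eR (sid D R))) = scomp D e (lunit D R)" .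
  qed (use H2 in simp_all)
  have LawR: "scomp D mR (shcomp D (sid D R) eR) = runit D R"
  proof (rule cart_uniq[OF ce])
    have IC7: "scomp D (shcomp D e e) (shcomp D (sid D R) eR) = shcomp D (scomp D e (sid D R)) (scomp D e eR)"
      using H2 by (intro interchange[symmetric]) simp_all
    have IC8: "shcomp D (scomp D (sid D N) e) (scomp D \<epsilon> (sunit D f)) = scomp D (shcomp D (sid D N) \<epsilon>) (shcomp D e (sunit D f))"
      using H2 by (intro interchange) simp_all
    have "scomp D e (scomp D mR (shcomp D (sid D R) eR)) = scomp D n (scomp D (shcomp D e e) (shcomp D (sid D R) eR))"
      using H2 by (simp add: emR2)
    also have "... = scomp D n (shcomp D (scomp D e (sid D R)) (scomp D e eR))" unfolding IC7 ..
    also have "... = scomp D n (shcomp D (scomp D (sid D N) e) (scomp D \<epsilon> (sunit D f)))" unfolding eeR using H2 by simp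
    also have "... = scomp D (scomp D n (shcomp D (sid D N) \<epsilon>)) (shcomp D e (sunit D f))" unfolding IC8 using H2 by simp
    also have "... = scomp D (runit D (scod D e)) (shcomp D e (sunit D (sleft D e)))" unfolding YR using H2 by simp
    also have "... = scomp D e (runit D R)" unfolding runit_nat[OF Re(4)] using H2 by simp
    finally show "scomp D e (scomp D mR (shcomp D (sid D R) eR)) = scomp D e (runit D R)" .
  qed (use H2 in simp_all)
  have X: "is_monad D (?A, R, mR, eR)"
    unfolding is_monad_def globular_def using H2 MA LawL LawR by simp
  have MM: "monad_mor D (?A, R, mR, eR) (B, N, n, \<epsilon>) e"
    unfolding monad_mor_def using X Y H2 emR eeR by simp
  have CA: "cartesian (is_monad D) (monad_mor D) (scomp D) fst (sleft D) (vhom D) (vcomp D) (?A, R, mR, eR) (B, N, n, \<epsilon>) e"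
    unfolding cartesian_def
  proof (intro allI impI)
    fix z h g
    assume Z: "is_monad D z \<and> monad_mor D z (B, N, n, \<epsilon>) h \<and> vhom D (fst z) (fst (?A, R, mR, eR)) g \<and>
        vcomp D (sleft D e) g = sleft D h"
    obtain C P p \<zeta> where z: "z = (C, P, p, \<zeta>)" by (cases z) auto
    have Zd: "C \<in> Ob D" "P \<in> HAr D" "hsrc D P = C" "htgt D P = C"
       "p \<in> Sq D" "sdom D p = hcomp D P P" "scod D p = P" "sleft D p = vid D C" "sright D p = vid D C"
       "\<zeta> \<in> Sq D" "sdom D \<zeta> = hunit D C" "scod D \<zeta> = P" "sleft D \<zeta> = vid D C" "sright D \<zeta> = vid D C"
      using Z unfolding z is_monad_def globular_def by auto
    have hd: "h \<in> Sq D" "sdom D h = P" "scod D h = N" "sleft D h = vcomp D f g" "sright D h = vcomp D f g"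
       "scomp D h p = scomp D n (shcomp D h h)" "scomp D h \<zeta> = scomp D \<epsilon> (sunit D (sleft D h))"
      using Z H2 unfolding z monad_mor_def by auto
    have gd: "g \<in> VAr D" "vdom D g = C" "vcod D g = ?A" using Z unfolding z vhom_def by auto
    note H3 = H2 Zd hd gd
    have "\<exists>b. b \<in> Sq D \<and> scod D b = sdom D e \<and> sleft D b = g \<and> sright D b = g \<and> scomp D e b = h"
      by (rule cartE[OF ce]) (use H3 in simp_all)
    then obtain k where k: "k \<in> Sq D" "scod D k = R" "sleft D k = g" "sright D k = g" and ek: "scomp D e k = h"
      using Re by auto
    have kd: "sdom D k = P" using scomp_dom[of k e] ek k H3 by simp
    show "\<exists>!k. monad_mor D z (?A, R, mR, eR) k \<and> sleft D k = g \<and> scomp D e k = h"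
    proof (rule ex1I[where a = k])
      have K1: "scomp D k p = scomp D mR (shcomp D k k)"
      proof (rule cart_uniq[OF ce])
        have IC: "scomp D (shcomp D e e) (shcomp D k k) = shcomp D (scomp D e k) (scomp D e k)"
          using H3 k kd by (intro interchange[symmetric]) simp_all
        have "scomp D e (scomp D k p) = scomp D (scomp D e k) p" using H3 k kd by simp
        also have "... = scomp D n (shcomp D h h)" unfolding ek by (rule hd(6))
        also have "... = scomp D n (scomp D (shcomp D e e) (shcomp D k k))" unfolding IC ek ..
        also have "... = scomp D e (scomp D mR (shcomp D k k))" using H3 k kd by (simp add: emR2)
        finally show "scomp D e (scomp D k p) = scomp D e (scomp D mR (shcomp D k k))" .
      qed (use H3 k kd in simp_all)
      have K2: "scomp D k \<zeta> = scomp D eR (sunit D (sleft D k))"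
      proof (rule cart_uniq[OF ce])
        have "scomp D e (scomp D k \<zeta>) = scomp D (scomp D e k) \<zeta>" using H3 k kd by simp
        also have "... = scomp D \<epsilon> (sunit D (vcomp D f g))" unfolding ek using hd by simp
        also have "... = scomp D e (scomp D eR (sunit D (sleft D k)))" using H3 k kd by (simp add: eeR2 sunit_vcomp)
        finally show "scomp D e (scomp D k \<zeta>) = scomp D e (scomp D eR (sunit D (sleft D k)))" .
      qed (use H3 k kd in simp_all)
      show "monad_mor D z (?A, R, mR, eR) k \<and> sleft D k = g \<and> scomp D e k = h"
        unfolding monad_mor_def using Z X K1 K2 k kd ek unfolding z by simp
    next
      fix k' assume K': "monad_mor D z (?A, R, mR, eR) k' \<and> sleft D k' = g \<and> scomp D e k' = h"
      then have k': "k' \<in> Sq D" "scod D k' = R" "sleft D k' = g" "sright D k' = g" "scomp D e k' = h"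
        unfolding z monad_mor_def by auto
      show "k' = k" by (rule cart_uniq[OF ce]) (use k' k ek Re in simp_all)
    qed
  qed
  show ?thesis using X MM CA Re by (intro exI[of _ "(?A, R, mR, eR)"] exI[of _ e]) simp
qed

lemma cmd_lift:
  assumes fib: "\<forall>f\<in>VAr D. has_companion D f \<and> has_conjoint D f"
    and X: "is_comonad D (A, C, \<Delta>, \<epsilon>)" and f: "f \<in> VAr D" "vdom D f = A"
  shows "\<exists>x e. is_comonad D x \<and> comonad_mor D (A, C, \<Delta>, \<epsilon>) x e \<and> fst x = vcod D f \<and> sleft D e = f \<and>
      cartesian (is_comonad D) (\<lambda>x y. comonad_mor D y x) (\<lambda>g f. scomp D f g) fst (sleft D)
        (\<lambda>a b. vhom D b a) (\<lambda>g f. vcomp D f g) x (A, C, \<Delta>, \<epsilon>) e"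
proof -
  have Xd: "A \<in> Ob D" "C \<in> HAr D" "hsrc D C = A" "htgt D C = A"
     "\<Delta> \<in> Sq D" "sdom D \<Delta> = C" "scod D \<Delta> = hcomp D C C" "sleft D \<Delta> = vid D A" "sright D \<Delta> = vid D A"
     "\<epsilon> \<in> Sq D" "sdom D \<epsilon> = C" "scod D \<epsilon> = hunit D A" "sleft D \<epsilon> = vid D A" "sright D \<epsilon> = vid D A"
    using X unfolding is_comonad_def globular_def by auto
  have XA: "scomp D (assoc D C C C) (scomp D (shcomp D \<Delta> (sid D C)) \<Delta>) = scomp D (shcomp D (sid D C) \<Delta>) \<Delta>"
   and XL: "scomp D (lunit D C) (scomp D (shcomp D \<epsilon> (sid D C)) \<Delta>) = sid D C"
   and XR: "scomp D (runit D C) (scomp D (shcomp D (sid D C) \<epsilon>) \<Delta>) = sid D C"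
    using X unfolding is_comonad_def by auto
  obtain R e where Re: "R \<in> HAr D" "hsrc D R = vcod D f" "htgt D R = vcod D f" "e \<in> Sq D" "sdom D e = C"
     "scod D e = R" "sleft D e = f" "sright D e = f" and ce: "opcart e"
    using ext[OF fib f(1) Xd(2)] Xd f by auto
  let ?B = "vcod D f"
  note H = Xd Re f
  have "\<exists>b. b \<in> Sq D \<and> sdom D b = scod D e \<and> sleft D b = vid D ?B \<and> sright D b = vid D ?B \<and> scomp D b e = scomp D (shcomp D e e) \<Delta>"
    by (rule opcartE[OF ce]) (use H in simp_all)
  then obtain dR where dR: "dR \<in> Sq D" "sdom D dR = R" "sleft D dR = vid D ?B" "sright D dR = vid D ?B"
     and edR: "scomp D dR e = scomp D (shcomp D e e) \<Delta>" using Re by auto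
  have dRd: "scod D dR = hcomp D R R" using scomp_cod[of e dR] edR dR H by simp
  have "\<exists>b. b \<in> Sq D \<and> sdom D b = scod D e \<and> sleft D b = vid D ?B \<and> sright D b = vid D ?B \<and> scomp D b e = scomp D (sunit D f) \<epsilon>"
    by (rule opcartE[OF ce]) (use H in simp_all)
  then obtain eR where eR: "eR \<in> Sq D" "sdom D eR = R" "sleft D eR = vid D ?B" "sright D eR = vid D ?B"
     and eeR: "scomp D eR e = scomp D (sunit D f) \<epsilon>" using Re by auto
  have eRd: "scod D eR = hunit D ?B" using scomp_cod[of e eR] eeR eR H by simp
  note H2 = H dR dRd eR eRd
  have edR2: "scomp D dR (scomp D e x) = scomp D (shcomp D e e) (scomp D \<Delta> x)" if "x \<in> Sq D" "scod D x = C" for x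
  proof -
    have "scomp D dR (scomp D e x) = scomp D (scomp D dR e) x" using that H2 by simp
    then show ?thesis unfolding edR using that H2 by simp
  qed
  have eeR2: "scomp D eR (scomp D e x) = scomp D (sunit D f) (scomp D \<epsilon> x)" if "x \<in> Sq D" "scod D x = C" for x
  proof -
    have "scomp D eR (scomp D e x) = scomp D (scomp D eR e) x" using that H2 by simp
    then show ?thesis unfolding eeR using that H2 by simp
  qed
  have CA: "scomp D (assoc D R R R) (scomp D (shcomp D dR (sid D R)) dR) = scomp D (shcomp D (sid D R) dR) dR"
  proof (rule opcart_uniq[OF ce])
    have IC1: "scomp D (shcomp D dR (sid D R)) (shcomp D e e) = shcomp D (scomp D dR e) (scomp D (sid D R) e)"
      using H2 by (intro interchange[symmetric]) simp_all
    have IC2: "shcomp D (scomp D (shcomp D e e) \<Delta>) (scomp D e (sid D C)) = scomp D (shcomp D (shcomp D e e) e) (shcomp D \<Delta> (sid D C))"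
      using H2 by (intro interchange) simp_all
    have NAT: "scomp D (assoc D R R R) (shcomp D (shcomp D e e) e) = scomp D (shcomp D e (shcomp D e e)) (assoc D C C C)"
      using assoc_nat[of e e e] H2 by simp
    have IC3: "scomp D (shcomp D (sid D R) dR) (shcomp D e e) = shcomp D (scomp D (sid D R) e) (scomp D dR e)"
      using H2 by (intro interchange[symmetric]) simp_all
    have IC4: "shcomp D (scomp D e (sid D C)) (scomp D (shcomp D e e) \<Delta>) = scomp D (shcomp D e (shcomp D e e)) (shcomp D (sid D C) \<Delta>)"
      using H2 by (intro interchange) simp_all
    have "scomp D (scomp D (assoc D R R R) (scomp D (shcomp D dR (sid D R)) dR)) e =
        scomp D (assoc D R R R) (scomp D (scomp D (shcomp D dR (sid D R)) (shcomp D e e)) \<Delta>)"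
      using H2 by (simp add: edR2 edR)
    also have "... = scomp D (assoc D R R R) (scomp D (shcomp D (scomp D dR e) (scomp D (sid D R) e)) \<Delta>)" unfolding IC1 ..
    also have "... = scomp D (assoc D R R R) (scomp D (shcomp D (scomp D (shcomp D e e) \<Delta>) (scomp D e (sid D C))) \<Delta>)"
      unfolding edR using H2 by simp
    also have "... = scomp D (assoc D R R R) (scomp D (scomp D (shcomp D (shcomp D e e) e) (shcomp D \<Delta> (sid D C))) \<Delta>)"
      unfolding IC2 ..
    also have "... = scomp D (scomp D (assoc D R R R) (shcomp D (shcomp D e e) e)) (scomp D (shcomp D \<Delta> (sid D C)) \<Delta>)"
      using H2 by simp
    also have "... = scomp D (shcomp D e (shcomp D e e)) (scomp D (assoc D C C C) (scomp D (shcomp D \<Delta> (sid D C)) \<Delta>))"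
      unfolding NAT using H2 by simp
    also have "... = scomp D (shcomp D e (shcomp D e e)) (scomp D (shcomp D (sid D C) \<Delta>) \<Delta>)" unfolding XA ..
    also have "... = scomp D (scomp D (shcomp D e (shcomp D e e)) (shcomp D (sid D C) \<Delta>)) \<Delta>" using H2 by simp
    also have "... = scomp D (shcomp D (scomp D e (sid D C)) (scomp D (shcomp D e e) \<Delta>)) \<Delta>" unfolding IC4 ..
    also have "... = scomp D (shcomp D (scomp D (sid D R) e) (scomp D dR e)) \<Delta>" unfolding edR using H2 by simp
    also have "... = scomp D (scomp D (shcomp D (sid D R) dR) (shcomp D e e)) \<Delta>" unfolding IC3 ..
    also have "... = scomp D (scomp D (shcomp D (sid D R) dR) dR) e" using H2 by (simp add: edR2 edR)
    finally show "scomp D (scomp D (assoc D R R R) (scomp D (shcomp D dR (sid D R)) dR)) e = scomp D (scomp D (shcomp D (sid D R) dR) dR) e" .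
  qed (use H2 in simp_all)
  have LawL: "scomp D (lunit D R) (scomp D (shcomp D eR (sid D R)) dR) = sid D R"
  proof (rule opcart_uniq[OF ce])
    have IC5: "scomp D (shcomp D eR (sid D R)) (shcomp D e e) = shcomp D (scomp D eR e) (scomp D (sid D R) e)"
      using H2 by (intro interchange[symmetric]) simp_all
    have IC6: "shcomp D (scomp D (sunit D f) \<epsilon>) (scomp D e (sid D C)) = scomp D (shcomp D (sunit D f) e) (shcomp D \<epsilon> (sid D C))"
      using H2 by (intro interchange) simp_all
    have "scomp D (scomp D (lunit D R) (scomp D (shcomp D eR (sid D R)) dR)) e =
        scomp D (lunit D R) (scomp D (scomp D (shcomp D eR (sid D R)) (shcomp D e e)) \<Delta>)"
      using H2 by (simp add: edR2 edR)
    also have "... = scomp D (lunit D R) (scomp D (shcomp D (scomp D eR e) (scomp D (sid D R) e)) \<Delta>)" unfolding IC5 ..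
    also have "... = scomp D (lunit D R) (scomp D (shcomp D (scomp D (sunit D f) \<epsilon>) (scomp D e (sid D C))) \<Delta>)"
      unfolding eeR using H2 by simp
    also have "... = scomp D (scomp D (lunit D (scod D e)) (shcomp D (sunit D (sright D e)) e)) (scomp D (shcomp D \<epsilon> (sid D C)) \<Delta>)"
      unfolding IC6 using H2 by simp
    also have "... = scomp D e (scomp D (lunit D C) (scomp D (shcomp D \<epsilon> (sid D C)) \<Delta>))"
      unfolding lunit_nat[OF Re(4)] using H2 by simp
    also have "... = scomp D (sid D R) e" unfolding XL using H2 by simp
    finally show "scomp D (scomp D (lunit D R) (scomp D (shcomp D eR (sid D R)) dR)) e = scomp D (sid D R) e" .
  qed (use H2 in simp_all)
  have LawR: "scomp D (runit D R) (scomp D (shcomp D (sid D R) eR) dR) = sid D R"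
  proof (rule opcart_uniq[OF ce])
    have IC7: "scomp D (shcomp D (sid D R) eR) (shcomp D e e) = shcomp D (scomp D (sid D R) e) (scomp D eR e)"
      using H2 by (intro interchange[symmetric]) simp_all
    have IC8: "shcomp D (scomp D e (sid D C)) (scomp D (sunit D f) \<epsilon>) = scomp D (shcomp D e (sunit D f)) (shcomp D (sid D C) \<epsilon>)"
      using H2 by (intro interchange) simp_all
    have "scomp D (scomp D (runit D R) (scomp D (shcomp D (sid D R) eR) dR)) e =
        scomp D (runit D R) (scomp D (scomp D (shcomp D (sid D R) eR) (shcomp D e e)) \<Delta>)"
      using H2 by (simp add: edR2 edR)
    also have "... = scomp D (runit D R) (scomp D (shcomp D (scomp D (sid D R) e) (scomp D eR e)) \<Delta>)" unfolding IC7 ..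
    also have "... = scomp D (runit D R) (scomp D (shcomp D (scomp D e (sid D C)) (scomp D (sunit D f) \<epsilon>)) \<Delta>)"
      unfolding eeR using H2 by simp
    also have "... = scomp D (scomp D (runit D (scod D e)) (shcomp D e (sunit D (sleft D e)))) (scomp D (shcomp D (sid D C) \<epsilon>) \<Delta>)"
      unfolding IC8 using H2 by simp
    also have "... = scomp D e (scomp D (runit D C) (scomp D (shcomp D (sid D C) \<epsilon>) \<Delta>))"
      unfolding runit_nat[OF Re(4)] using H2 by simp
    also have "... = scomp D (sid D R) e" unfolding XR using H2 by simp
    finally show "scomp D (scomp D (runit D R) (scomp D (shcomp D (sid D R) eR) dR)) e = scomp D (sid D R) e" .
  qed (use H2 in simp_all)
  have Xn: "is_comonad D (?B, R, dR, eR)"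
    unfolding is_comonad_def globular_def using H2 CA LawL LawR by simp
  have MM: "comonad_mor D (A, C, \<Delta>, \<epsilon>) (?B, R, dR, eR) e"
    unfolding comonad_mor_def using X Xn H2 edR eeR by simp
  have CC: "cartesian (is_comonad D) (\<lambda>x y. comonad_mor D y x) (\<lambda>g f. scomp D f g) fst (sleft D)
        (\<lambda>a b. vhom D b a) (\<lambda>g f. vcomp D f g) (?B, R, dR, eR) (A, C, \<Delta>, \<epsilon>) e"
    unfolding cartesian_def
  proof (intro allI impI)
    fix z h g
    assume Z: "is_comonad D z \<and> comonad_mor D (A, C, \<Delta>, \<epsilon>) z h \<and> vhom D (fst (?B, R, dR, eR)) (fst z) g \<and>
        vcomp D g (sleft D e) = sleft D h"
    obtain B' E d' \<epsilon>' where z: "z = (B', E, d', \<epsilon>')" by (cases z) auto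
    have Zd: "B' \<in> Ob D" "E \<in> HAr D" "hsrc D E = B'" "htgt D E = B'"
       "d' \<in> Sq D" "sdom D d' = E" "scod D d' = hcomp D E E" "sleft D d' = vid D B'" "sright D d' = vid D B'"
       "\<epsilon>' \<in> Sq D" "sdom D \<epsilon>' = E" "scod D \<epsilon>' = hunit D B'" "sleft D \<epsilon>' = vid D B'" "sright D \<epsilon>' = vid D B'"
      using Z unfolding z is_comonad_def globular_def by auto
    have gd: "g \<in> VAr D" "vdom D g = ?B" "vcod D g = B'" using Z unfolding z vhom_def by auto
    have hd: "h \<in> Sq D" "sdom D h = C" "scod D h = E" "sleft D h = vcomp D g f" "sright D h = vcomp D g f"
       "scomp D (shcomp D h h) \<Delta> = scomp D d' h" "scomp D \<epsilon>' h = scomp D (sunit D (sleft D h)) \<epsilon>"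
      using Z H2 unfolding z comonad_mor_def by auto
    note H3 = H2 Zd hd gd
    have "\<exists>b. b \<in> Sq D \<and> sdom D b = scod D e \<and> sleft D b = g \<and> sright D b = g \<and> scomp D b e = h"
      by (rule opcartE[OF ce]) (use H3 in simp_all)
    then obtain k where k: "k \<in> Sq D" "sdom D k = R" "sleft D k = g" "sright D k = g" and ek: "scomp D k e = h"
      using Re by auto
    have kd: "scod D k = E" using scomp_cod[of e k] ek k H3 by simp
    show "\<exists>!k. comonad_mor D (?B, R, dR, eR) z k \<and> sleft D k = g \<and> scomp D k e = h"
    proof (rule ex1I[where a = k])
      have K1: "scomp D (shcomp D k k) dR = scomp D d' k"
      proof (rule opcart_uniq[OF ce])
        have IC: "scomp D (shcomp D k k) (shcomp D e e) = shcomp D (scomp D k e) (scomp D k e)"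
          using H3 k kd by (intro interchange[symmetric]) simp_all
        have "scomp D (scomp D (shcomp D k k) dR) e = scomp D (scomp D (shcomp D k k) (shcomp D e e)) \<Delta>"
          using H3 k kd by (simp add: edR2 edR)
        also have "... = scomp D (shcomp D h h) \<Delta>" unfolding IC ek ..
        also have "... = scomp D d' h" by (rule hd(6))
        also have "... = scomp D (scomp D d' k) e" unfolding ek[symmetric] using H3 k kd by simp
        finally show "scomp D (scomp D (shcomp D k k) dR) e = scomp D (scomp D d' k) e" .
      qed (use H3 k kd in simp_all)
      have K2: "scomp D \<epsilon>' k = scomp D (sunit D (sleft D k)) eR"
      proof (rule opcart_uniq[OF ce])
        have "scomp D (scomp D \<epsilon>' k) e = scomp D \<epsilon>' h" unfolding ek[symmetric] using H3 k kd by simp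
        also have "... = scomp D (sunit D (vcomp D g f)) \<epsilon>" using hd by simp
        also have "... = scomp D (scomp D (sunit D (sleft D k)) eR) e" using H3 k kd by (simp add: eeR2 eeR sunit_vcomp)
        finally show "scomp D (scomp D \<epsilon>' k) e = scomp D (scomp D (sunit D (sleft D k)) eR) e" .
      qed (use H3 k kd in simp_all)
      show "comonad_mor D (?B, R, dR, eR) z k \<and> sleft D k = g \<and> scomp D k e = h"
        unfolding comonad_mor_def using Z Xn K1 K2 k kd ek unfolding z by simp
    next
      fix k' assume K': "comonad_mor D (?B, R, dR, eR) z k' \<and> sleft D k' = g \<and> scomp D k' e = h"
      then have k': "k' \<in> Sq D" "sdom D k' = R" "sleft D k' = g" "sright D k' = g" "scomp D k' e = h"
        unfolding z comonad_mor_def by auto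
      show "k' = k" by (rule opcart_uniq[OF ce]) (use k' k ek Re in simp_all)
    qed
  qed
  show ?thesis using Xn MM CC Re by (intro exI[of _ "(?B, R, dR, eR)"] exI[of _ e]) simp
qed

end

theorem proposition3p17:
  fixes D :: "('o,'v,'h,'s) dblcat"
  assumes "fibrant D"
  shows "Mnd_fibration D \<and> Cmd_opfibration D"
proof -
  have P: "pdc D" and fib: "\<forall>f\<in>VAr D. has_companion D f \<and> has_conjoint D f"
    using assms unfolding fibrant_def pdc_def by auto
  have M: "Mnd_fibration D" unfolding Mnd_fibration_def fibration_def
  proof (intro allI impI)
    fix y a f assume A: "is_monad D y \<and> vhom D a (fst y) f"
    obtain B N n \<epsilon> where y: "y = (B, N, n, \<epsilon>)" by (cases y) auto
    have f: "f \<in> VAr D" "vdom D f = a" "vcod D f = B" using A unfolding y vhom_def by auto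
    show "\<exists>x e. is_monad D x \<and> monad_mor D x y e \<and> fst x = a \<and> sleft D e = f \<and>
          cartesian (is_monad D) (monad_mor D) (scomp D) fst (sleft D) (vhom D) (vcomp D) x y e"
      using pdc.mnd_lift[OF P fib, of B N n \<epsilon> f] A f unfolding y by auto
  qed
  have C: "Cmd_opfibration D" unfolding Cmd_opfibration_def opfibration_def fibration_def
  proof (intro allI impI)
    fix y a f assume A: "is_comonad D y \<and> vhom D (fst y) a f"
    obtain A0 C0 d0 \<epsilon> where y: "y = (A0, C0, d0, \<epsilon>)" by (cases y) auto
    have f: "f \<in> VAr D" "vdom D f = A0" "vcod D f = a" using A unfolding y vhom_def by auto
    show "\<exists>x e. is_comonad D x \<and> comonad_mor D y x e \<and> fst x = a \<and> sleft D e = f \<and>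
          cartesian (is_comonad D) (\<lambda>x y. comonad_mor D y x) (\<lambda>g f. scomp D f g) fst (sleft D)
            (\<lambda>a b. vhom D b a) (\<lambda>g f. vcomp D f g) x y e"
      using pdc.cmd_lift[OF P fib, of A0 C0 d0 \<epsilon> f] A f unfolding y by auto
  qed
  show ?thesis using M C by simp
qed

end
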